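(* Let $N=M\ell$ with $\ell$ prime, and let $\beta:=\beta_\ell(M)_*:\mathrm{Div}^0_{\mathrm{cusp}}(X_0(N))(\mathbf{Q})\to\mathrm{Div}^0_{\mathrm{cusp}}(X_0(M))(\mathbf{Q})$ be the push-forward along the degeneracy map. Then $$\mathrm{Div}^0_{\mathrm{cusp}}(X_0(M))(\mathbf{Q})\big/\beta\big(\mathrm{Div}^0_{\mathrm{cusp}}(X_0(N))(\mathbf{Q})\big)\simeq(\mathbf{Z}/\ell\mathbf{Z})^k$$ for some integer $k\ge0$. Moreover, if $\ell^4\nmid N$ then $k=0$, and consequently $\beta_\ell(M)_*(\mathscr{C}(N))=\mathscr{C}(M)$.
   Context: $\beta_\ell(M):X_0(M\ell)\to X_0(M)$ is the degeneracy map induced by $\tau\mapsto\ell\tau$ on the upper half-plane (modularly, $(E,C)\mapsto(E/C[\ell],C/C[\ell])$). $\mathrm{Div}^0_{\mathrm{cusp}}(X_0(N))(\mathbf{Q})$ denotes the group of degree-$0$ divisors on $X_0(N)$ supported on cusps and fixed by $\mathrm{Gal}(\overline{\mathbf{Q}}/\mathbf{Q})$. $\mathscr{C}(N)\subset J_0(N)$ is the group of linear equivalence classes of such divisors (the rational cuspidal divisor class group). *)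

theory Defs
  imports "HOL-Algebra.Algebra" "HOL-Number_Theory.Cong"
begin

text \<open>Cusps of X_0(N): Gamma_0(N)-orbits of P^1(Q), a cusp x/y being represented by a
coprime pair (x,y) of integers; a matrix (a b; c d) acts on the column vector (x,y).\<close>

definition cusp_reps :: "(int \<times> int) set" where
  "cusp_reps = {(x, y). coprime x y}"

definition gamma0_rel :: "nat \<Rightarrow> ((int \<times> int) \<times> (int \<times> int)) set" where
  "gamma0_rel N = {((x, y), (x', y')). coprime x y \<and> coprime x' y' \<and>
      (\<exists>a b c d. a * d - b * c = 1 \<and> int N dvd c \<and> x' = a * x + b * y \<and> y' = c * x + d * y)}"

definition cusps :: "nat \<Rightarrow> (int \<times> int) set set" where
  "cusps N = cusp_reps // gamma0_rel N"

text \<open>Galois action on cusps: sigma_u (zeta_N to zeta_N^u) sends the cusp x/y to x'/y with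
x' congruent to u x mod N (the conjugation by diag(u,1)).\<close>

definition galois_rel :: "nat \<Rightarrow> int \<Rightarrow> (int \<times> int) set \<Rightarrow> (int \<times> int) set \<Rightarrow> bool" where
  "galois_rel N u P Q \<longleftrightarrow> (\<exists>x y x'. (x, y) \<in> P \<and> (x', y) \<in> Q \<and> [x' = u * x] (mod int N))"

text \<open>Cuspidal divisors on X_0(N): integer-valued functions on the (finite) set of cusps.
Div^0_cusp(X_0(N))(Q): degree zero and Galois invariant.\<close>

definition rat_cusp_div0 :: "nat \<Rightarrow> ((int \<times> int) set \<Rightarrow> int) set" where
  "rat_cusp_div0 N = {D. (\<forall>P. P \<notin> cusps N \<longrightarrow> D P = 0) \<and> (\<Sum>P\<in>cusps N. D P) = 0 \<and>
      (\<forall>u. coprime u (int N) \<longrightarrow> (\<forall>P\<in>cusps N. \<forall>Q\<in>cusps N. galois_rel N u P Q \<longrightarrow> D P = D Q))}"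

definition div0_group :: "nat \<Rightarrow> ((int \<times> int) set \<Rightarrow> int) monoid" where
  "div0_group N = \<lparr>carrier = rat_cusp_div0 N, monoid.mult = (\<lambda>D E P. D P + E P), one = (\<lambda>_. 0)\<rparr>"

text \<open>Degeneracy map beta_l(M): X_0(Ml) \<rightarrow> X_0(M), tau \<mapsto> l tau, on cusps: x/y \<mapsto> (l x)/y.\<close>

definition beta_cusp :: "nat \<Rightarrow> nat \<Rightarrow> (int \<times> int) set \<Rightarrow> (int \<times> int) set" where
  "beta_cusp l M P = (let (x, y) = (SOME p. p \<in> P); g = gcd (int l * x) y
                      in gamma0_rel M `` {(int l * x div g, y div g)})"

definition beta_push :: "nat \<Rightarrow> nat \<Rightarrow> ((int \<times> int) set \<Rightarrow> int) \<Rightarrow> ((int \<times> int) set \<Rightarrow> int)" where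
  "beta_push l M D Q = (if Q \<in> cusps M
      then (\<Sum>P\<in>{P \<in> cusps (M * l). beta_cusp l M P = Q}. D P) else 0)"

end

theory Submission
  imports Defs
begin

definition G0 :: "nat \<Rightarrow> int \<Rightarrow> int \<Rightarrow> int \<Rightarrow> int \<Rightarrow> bool" where
  "G0 N a b c d \<longleftrightarrow> a * d - b * c = 1 \<and> int N dvd c"

lemma coprime_lin:
  fixes x y a b c d :: int
  assumes "a * d - b * c = 1" "coprime x y"
  shows "coprime (a * x + b * y) (c * x + d * y)"
proof (rule coprimeI)
  fix k assume k1: "k dvd a * x + b * y" and k2: "k dvd c * x + d * y"
  have ex: "x = d * (a * x + b * y) - b * (c * x + d * y)"
  proof -
    have "d * (a * x + b * y) - b * (c * x + d * y) = (a * d - b * c) * x" by (simp add: algebra_simps)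
    then show ?thesis using assms(1) by simp
  qed
  have ey: "y = a * (c * x + d * y) - c * (a * x + b * y)"
  proof -
    have "a * (c * x + d * y) - c * (a * x + b * y) = (a * d - b * c) * y" by (simp add: algebra_simps)
    then show ?thesis using assms(1) by simp
  qed
  have "k dvd x" by (subst ex) (simp add: k1 k2)
  moreover have "k dvd y" by (subst ey) (simp add: k1 k2)
  ultimately show "is_unit k" using assms(2) coprime_common_divisor by blast
qed

lemma relI:
  assumes "coprime x y" "G0 N a b c d"
  shows "((x, y), (a * x + b * y, c * x + d * y)) \<in> gamma0_rel N"
  using assms coprime_lin unfolding gamma0_rel_def G0_def by blast

lemma relI':
  assumes "coprime x y" "G0 N a b c d" "x' = a * x + b * y" "y' = c * x + d * y"
  shows "((x, y), (x', y')) \<in> gamma0_rel N"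
  using relI assms by simp

lemma relE:
  assumes "((x, y), (x', y')) \<in> gamma0_rel N"
  obtains a b c d where "G0 N a b c d" "x' = a * x + b * y" "y' = c * x + d * y"
    "coprime x y" "coprime x' y'"
  using assms unfolding gamma0_rel_def G0_def by blast

lemma rel_refl: "coprime x y \<Longrightarrow> ((x, y), (x, y)) \<in> gamma0_rel N"
  by (rule relI'[where a=1 and b=0 and c=0 and d=1]) (auto simp: G0_def)

lemma rel_sym:
  assumes "((x, y), (x', y')) \<in> gamma0_rel N"
  shows "((x', y'), (x, y)) \<in> gamma0_rel N"
proof -
  obtain a b c d where g: "G0 N a b c d" "x' = a * x + b * y" "y' = c * x + d * y"
    "coprime x y" "coprime x' y'" using relE[OF assms] by metis
  have det: "a * d - b * c = 1" and Nc: "int N dvd c" using g(1) by (auto simp: G0_def)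
  show ?thesis
  proof (rule relI'[where a=d and b="-b" and c="-c" and d=a])
    show "coprime x' y'" by fact
    show "G0 N d (- b) (- c) a" using det Nc by (auto simp: G0_def algebra_simps)
    have "d * x' + - b * y' = (a * d - b * c) * x" using g(2,3) by (simp add: algebra_simps)
    then show "x = d * x' + - b * y'" using det by simp
    have "- c * x' + a * y' = (a * d - b * c) * y" using g(2,3) by (simp add: algebra_simps)
    then show "y = - c * x' + a * y'" using det by simp
  qed
qed

lemma rel_trans:
  assumes "((x, y), (x', y')) \<in> gamma0_rel N" "((x', y'), (x'', y'')) \<in> gamma0_rel N"
  shows "((x, y), (x'', y'')) \<in> gamma0_rel N"
proof -
  obtain a b c d where g: "G0 N a b c d" "x' = a * x + b * y" "y' = c * x + d * y"
    "coprime x y" "coprime x' y'" using relE[OF assms(1)] by metis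
  obtain a' b' c' d' where g': "G0 N a' b' c' d'" "x'' = a' * x' + b' * y'" "y'' = c' * x' + d' * y'"
    "coprime x'' y''" using relE[OF assms(2)] by metis
  have det: "a * d - b * c = 1" "a' * d' - b' * c' = 1" and Nc: "int N dvd c" "int N dvd c'"
    using g(1) g'(1) by (auto simp: G0_def)
  have "(a' * a + b' * c) * (c' * b + d' * d) - (a' * b + b' * d) * (c' * a + d' * c)
      = (a * d - b * c) * (a' * d' - b' * c')" by (simp add: algebra_simps)
  also have "\<dots> = 1" using det by simp
  finally have D: "(a' * a + b' * c) * (c' * b + d' * d) - (a' * b + b' * d) * (c' * a + d' * c) = 1" .
  show ?thesis
    by (rule relI'[where a="a' * a + b' * c" and b="a' * b + b' * d" and c="c' * a + d' * c" and d="c' * b + d' * d"])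
       (use g g' D Nc in \<open>auto simp: G0_def algebra_simps\<close>)
qed

lemma rel_coprime: "((x, y), (x', y')) \<in> gamma0_rel N \<Longrightarrow> coprime x y \<and> coprime x' y'"
  unfolding gamma0_rel_def by auto

lemma equiv_rel: "equiv cusp_reps (gamma0_rel N)"
proof (rule equivI)
  show "refl_on cusp_reps (gamma0_rel N)"
    unfolding refl_on_def cusp_reps_def using rel_refl by (auto simp: gamma0_rel_def)
  show "sym (gamma0_rel N)" unfolding sym_def using rel_sym by auto
  show "trans (gamma0_rel N)" unfolding trans_def using rel_trans by auto
  show "gamma0_rel N \<subseteq> cusp_reps \<times> cusp_reps"
    unfolding gamma0_rel_def cusp_reps_def by auto
qed


lemma cusps_class: "P \<in> cusps N \<Longrightarrow> p \<in> P \<Longrightarrow> P = gamma0_rel N `` {p}"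
  unfolding cusps_def
proof (erule quotientE)
  fix x assume "P = gamma0_rel N `` {x}" "p \<in> P"
  then show "P = gamma0_rel N `` {p}" using equiv_class_eq[OF equiv_rel] by auto
qed

lemma cusps_ne: "P \<in> cusps N \<Longrightarrow> \<exists>p. p \<in> P"
  unfolding cusps_def using equiv_rel in_quotient_imp_non_empty by blast

lemma cusps_rel: "P \<in> cusps N \<Longrightarrow> p \<in> P \<Longrightarrow> q \<in> P \<Longrightarrow> (p, q) \<in> gamma0_rel N"
  unfolding cusps_def using in_quotient_imp_in_rel[OF equiv_rel] by blast

lemma class_in_cusps: "coprime x y \<Longrightarrow> gamma0_rel N `` {(x, y)} \<in> cusps N"
  unfolding cusps_def by (rule quotientI) (simp add: cusp_reps_def)

lemma class_self: "coprime x y \<Longrightarrow> (x, y) \<in> gamma0_rel N `` {(x, y)}"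
  using rel_refl by auto

lemma class_eq: "((x, y), (x', y')) \<in> gamma0_rel N \<Longrightarrow> gamma0_rel N `` {(x, y)} = gamma0_rel N `` {(x', y')}"
  by (rule equiv_class_eq[OF equiv_rel])

lemma class_eq_iff: "coprime x y \<Longrightarrow> coprime x' y' \<Longrightarrow>
    gamma0_rel N `` {(x, y)} = gamma0_rel N `` {(x', y')} \<longleftrightarrow> ((x, y), (x', y')) \<in> gamma0_rel N"
  using equiv_rel by (intro eq_equiv_class_iff) (auto simp: cusp_reps_def)

lemma cusps_coprime: "P \<in> cusps N \<Longrightarrow> (x, y) \<in> P \<Longrightarrow> coprime x y"
  using cusps_rel rel_coprime by blast

lemma some_in: "P \<in> cusps N \<Longrightarrow> (SOME p. p \<in> P) \<in> P"
  using cusps_ne by (meson someI_ex)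

lemma mem_class_rel: "(x', y') \<in> gamma0_rel N `` {(x, y)} \<longleftrightarrow> ((x, y), (x', y')) \<in> gamma0_rel N"
  by simp

lemma prime_avoid:
  fixes a b n :: int
  assumes "n \<noteq> 0" "coprime a b"
  shows "\<exists>k. coprime (a + k * b) n"
proof -
  define S where "S = {p \<in> prime_factors n. \<not> p dvd a}"
  define k where "k = \<Prod>S"
  have finS: "finite S" unfolding S_def by auto
  have Sp: "\<And>p. p \<in> S \<Longrightarrow> Factorial_Ring.prime p" unfolding S_def by auto
  have "coprime (a + k * b) n"
  proof (rule ccontr)
    assume "\<not> coprime (a + k * b) n"
    then have "\<not> is_unit (gcd (a + k * b) n)" "gcd (a + k * b) n \<noteq> 0"
      using assms(1) coprime_iff_gcd_eq_1 by auto
    then obtain p where "p dvd gcd (a + k * b) n" "Factorial_Ring.prime p"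
      using prime_divisor_exists by blast
    then have p: "Factorial_Ring.prime p" "p dvd a + k * b" "p dvd n" by auto
    show False
    proof (cases "p dvd a")
      case True
      have "\<not> p dvd b" using True assms(2) p(1) using coprime_common_divisor not_prime_unit by blast
      have "\<not> p dvd k"
      proof
        assume "p dvd k"
        then obtain q where q: "q \<in> S" "p dvd q" unfolding k_def
          using prime_dvd_prod_iff[OF finS p(1)] by auto
        have "Factorial_Ring.prime q" using Sp q(1) by auto
        then have "p = q" using q(2) p(1) by (simp add: primes_dvd_imp_eq)
        then show False using q(1) True unfolding S_def by auto
      qed
      then have "\<not> p dvd k * b" using \<open>\<not> p dvd b\<close> p(1) prime_dvd_mult_iff by blast
      then show False using p(2) True by (metis dvd_add_right_iff)
    next
      case False
      have "p > 0" using p(1) prime_gt_0_int by blast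
      then have "normalize p \<in> S" unfolding S_def using p False assms(1)
        by (simp add: in_prime_factors_iff)
      then have "normalize p dvd k" unfolding k_def using finS by (rule dvd_prodI[rotated])
      then have "p dvd k * b" by simp
      then show False using p(2) False by (metis dvd_add_left_iff)
    qed
  qed
  then show ?thesis by blast
qed


lemma lin_coprime: "s * a + t * b = (1::int) \<Longrightarrow> coprime a b"
proof (rule coprimeI)
  fix k assume "s * a + t * b = 1" "k dvd a" "k dvd b"
  then show "is_unit k"
    using dvd_add[OF dvd_mult[OF \<open>k dvd a\<close>, of s] dvd_mult[OF \<open>k dvd b\<close>, of t]] by simp
qed

lemma normal_form:
  assumes cp: "coprime x y" and N: "N \<ge> 1"
  shows "\<exists>x'. ((x, y), (x', gcd y (int N))) \<in> gamma0_rel N"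
proof -
  define g where "g = gcd y (int N)"
  have gpos: "g > 0" using N unfolding g_def by simp
  have "gcd y (int N * x) = gcd y (int N)"
    using cp by (simp add: gcd_mult_right_right_cancel coprime_commute)
  then have gx: "gcd (int N * x) y = g" unfolding g_def by (simp add: gcd.commute)
  obtain s t where st: "s * (int N * x) + t * y = g" using bezout_int[of "int N * x" y] gx by auto
  define A where "A = int N * x div g"
  define B where "B = y div g"
  have Ag: "int N * x = A * g" unfolding A_def by (metis gx gcd_dvd1 dvd_div_mult_self)
  have Bg: "y = B * g" unfolding B_def by (metis gx gcd_dvd2 dvd_div_mult_self)
  have st1: "s * A + t * B = 1"
  proof -
    have "(s * A + t * B) * g = 1 * g" using st Ag Bg by (simp add: algebra_simps)
    then show ?thesis using gpos by simp
  qed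
  have "coprime t A" using lin_coprime[of B t s A] st1 by (simp add: algebra_simps)
  then obtain k where k: "coprime (t + k * A) (int N)" using prime_avoid[of "int N" t A] N by auto
  define d where "d = t + k * A"
  define c0 where "c0 = s - k * B"
  have e1: "c0 * A + d * B = 1" unfolding c0_def d_def using st1 by (simp add: algebra_simps)
  have cd: "coprime d c0" using lin_coprime[of B d A c0] e1 by (simp add: algebra_simps)
  have "coprime d (int N * c0)" using cd k unfolding d_def[symmetric] by simp
  then obtain a b' where ab: "a * d + b' * (int N * c0) = 1"
    using bezout_int[of d "int N * c0"] by (auto simp: coprime_iff_gcd_eq_1)
  have G: "G0 N a (- b') (int N * c0) d" unfolding G0_def using ab by (simp add: algebra_simps)
  have ye: "int N * c0 * x + d * y = g"
  proof -
    have "int N * c0 * x + d * y = (c0 * A + d * B) * g" using Ag Bg by (simp add: algebra_simps)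
    then show ?thesis using e1 by simp
  qed
  have "((x, y), (a * x + - b' * y, int N * c0 * x + d * y)) \<in> gamma0_rel N"
    by (rule relI[OF cp G])
  then show ?thesis using ye unfolding g_def by auto
qed

lemma rel_gcd:
  assumes "((x, y), (x', y')) \<in> gamma0_rel N"
  shows "gcd y' (int N) = gcd y (int N)"
proof -
  obtain a b c d where g: "G0 N a b c d" "x' = a * x + b * y" "y' = c * x + d * y"
    using relE[OF assms] by metis
  obtain c0 where c: "c = int N * c0" using g(1) unfolding G0_def by auto
  have det: "a * d - b * c = 1" using g(1) unfolding G0_def by auto
  have cpd: "coprime (int N) d"
    using lin_coprime[of "- b * c0" "int N" a d] det c by (simp add: algebra_simps)
  have "gcd y' (int N) = gcd (d * y + (c0 * x) * int N) (int N)" using g(3) c by (simp add: algebra_simps)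
  also have "\<dots> = gcd (d * y) (int N)"
    using gcd_add_mult[of "int N" "c0 * x" "d * y"] by (simp add: gcd.commute add.commute)
  also have "\<dots> = gcd y (int N)" using cpd by (simp add: gcd_mult_left_left_cancel)
  finally show ?thesis .
qed

lemma inv_core:
  fixes a b c d g n' c0 x y x' y' Y :: int
  assumes "a * d - b * c = 1" "c = g * n' * c0" "y = g * Y" "x' = a * x + b * y" "y' = c * x + d * y"
  shows "y' = g * (n' * c0 * x + d * Y)"
    and "x' * (n' * c0 * x + d * Y) - x * Y = g * (b * n' * c0 * x * Y + b * d * Y ^ 2) + n' * (a * c0 * x ^ 2 + b * g * c0 * x * Y)"
proof -
  show "y' = g * (n' * c0 * x + d * Y)" using assms by (simp add: algebra_simps)
  have "x' * (n' * c0 * x + d * Y) - x * Y - (g * (b * n' * c0 * x * Y + b * d * Y ^ 2) + n' * (a * c0 * x ^ 2 + b * g * c0 * x * Y))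
      = (a * d - b * c - 1) * (x * Y)" using assms(2-5) by (simp add: algebra_simps power2_eq_square)
  then show "x' * (n' * c0 * x + d * Y) - x * Y = g * (b * n' * c0 * x * Y + b * d * Y ^ 2) + n' * (a * c0 * x ^ 2 + b * g * c0 * x * Y)"
    using assms(1) by simp
qed

lemma rel_inv:
  assumes r: "((x, y), (x', y')) \<in> gamma0_rel N" and N: "N \<ge> 1"
    and g: "g = gcd y (int N)" and m1: "m dvd g" and m2: "m dvd int N div g"
  shows "[x' * (y' div g) = x * (y div g)] (mod m)"
proof -
  obtain a b c d where G: "G0 N a b c d" "x' = a * x + b * y" "y' = c * x + d * y"
    using relE[OF r] by metis
  have gpos: "g > 0" using N g by simp
  obtain c0 where c: "c = int N * c0" using G(1) unfolding G0_def by auto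
  define n' where "n' = int N div g"
  have Nn: "int N = g * n'" unfolding n'_def g by simp
  define Y where "Y = y div g"
  have yY: "y = g * Y" unfolding Y_def g by simp
  have det: "a * d - b * c = 1" using G(1) unfolding G0_def by auto
  have c': "c = g * n' * c0" using c Nn by simp
  note ic = inv_core[OF det c' yY G(2) G(3)]
  have y'd: "y' div g = n' * c0 * x + d * Y" using ic(1) gpos by simp
  have "m dvd x' * (y' div g) - x * (y div g)"
    unfolding y'd Y_def[symmetric] ic(2) using m1 m2 unfolding n'_def[symmetric]
    by (simp add: dvd_add dvd_mult2)
  then show ?thesis by (simp add: cong_iff_dvd_diff)
qed

lemma class_nf:
  fixes g n' x1 x2 :: int
  assumes gpos: "g > 0" and Nn: "int N = g * n'" and c1: "coprime x1 g" and c2: "coprime x2 g"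
    and cg: "[x1 = x2] (mod gcd g n')"
  shows "((x1, g), (x2, g)) \<in> gamma0_rel N"
proof -
  have "coprime (x1 * x2) g" using c1 c2 by simp
  then obtain w v where wv: "w * (x1 * x2) + v * g = 1"
    using bezout_int[of "x1 * x2" g] by (auto simp: coprime_iff_gcd_eq_1)
  obtain s t where st: "s * n' + t * g = gcd g n'" using bezout_int[of n' g] by (auto simp: gcd.commute)
  obtain e where e: "x2 - x1 = gcd g n' * e" using cg by (metis cong_iff_dvd_diff cong_sym dvdE)
  define c0 where "c0 = s * e * w"
  define d where "d = 1 - n' * c0 * x1"
  define b where "b = e * (n' * s * v + t)"
  define a where "a = 1 + n' * c0 * x2"
  have bg: "b * g = d * x2 - x1"
  proof -
    have "d * x2 - x1 = (x2 - x1) - n' * s * e * (w * (x1 * x2))" unfolding d_def c0_def by (simp add: algebra_simps)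
    also have "\<dots> = (s * n' + t * g) * e - n' * s * e * (1 - v * g)"
    proof -
      have w1: "w * (x1 * x2) = 1 - v * g" using wv by simp
      have e1: "x2 - x1 = (s * n' + t * g) * e" using e st by simp
      show ?thesis by (simp only: w1 e1)
    qed
    also have "\<dots> = b * g" unfolding b_def by (simp add: algebra_simps)
    finally show ?thesis by simp
  qed
  have det: "a * d - b * (g * n' * c0) = 1"
  proof -
    have "a * d - b * (g * n' * c0) = a * d - (b * g) * n' * c0" by (simp add: algebra_simps)
    also have "\<dots> = 1" unfolding bg unfolding a_def d_def by (simp add: algebra_simps)
    finally show ?thesis .
  qed
  have G: "G0 N a b (g * n' * c0) d" unfolding G0_def using det Nn by simp
  show ?thesis
  proof (rule relI'[OF c1 G])
    show "x2 = a * x1 + b * g" using bg unfolding a_def d_def by (simp add: algebra_simps)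
    show "g = g * n' * c0 * x1 + d * g" unfolding d_def by (simp add: algebra_simps)
  qed
qed


lemma nf_mem:
  assumes "P \<in> cusps N" "N \<ge> 1" "(x, y) \<in> P"
  obtains p where "(p, gcd y (int N)) \<in> P" "coprime p (gcd y (int N))"
proof -
  have cp: "coprime x y" using cusps_coprime assms by blast
  obtain p where r: "((x, y), (p, gcd y (int N))) \<in> gamma0_rel N" using normal_form[OF cp assms(2)] by blast
  have "P = gamma0_rel N `` {(x, y)}" using cusps_class assms by blast
  then have "(p, gcd y (int N)) \<in> P" using r by simp
  moreover have "coprime p (gcd y (int N))" using rel_coprime[OF r] by simp
  ultimately show ?thesis using that by blast
qed

lemma cusps_eq:
  assumes N: "N \<ge> 1" and P: "P \<in> cusps N" and Q: "Q \<in> cusps N"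
    and p1: "(x1, y1) \<in> P" and p2: "(x2, y2) \<in> Q"
    and gg: "gcd y2 (int N) = gcd y1 (int N)"
    and cg: "[x1 * (y1 div gcd y1 (int N)) = x2 * (y2 div gcd y1 (int N))] (mod gcd (gcd y1 (int N)) (int N div gcd y1 (int N)))"
  shows "P = Q"
proof -
  define g where "g = gcd y1 (int N)"
  define h where "h = gcd g (int N div g)"
  have gpos: "g > 0" using N unfolding g_def by simp
  have cp1: "coprime x1 y1" using cusps_coprime P p1 by blast
  have cp2: "coprime x2 y2" using cusps_coprime Q p2 by blast
  obtain q1 where r1: "((x1, y1), (q1, g)) \<in> gamma0_rel N"
    using normal_form[OF cp1 N] unfolding g_def by blast
  obtain q2 where r2: "((x2, y2), (q2, g)) \<in> gamma0_rel N"
    using normal_form[OF cp2 N] gg unfolding g_def by auto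
  have hg: "h dvd g" "h dvd int N div g" unfolding h_def by auto
  have i1: "[q1 * (g div g) = x1 * (y1 div g)] (mod h)"
    by (rule rel_inv[OF r1 N _ hg]) (simp add: g_def)
  have i2: "[q2 * (g div g) = x2 * (y2 div g)] (mod h)"
    by (rule rel_inv[OF r2 N _ hg]) (simp add: g_def gg)
  have gg1: "g div g = 1" using gpos by simp
  have j1: "[q1 = x1 * (y1 div g)] (mod h)" using i1 gg1 by simp
  have j2: "[q2 = x2 * (y2 div g)] (mod h)" using i2 gg1 by simp
  have cg': "[x1 * (y1 div g) = x2 * (y2 div g)] (mod h)" using cg unfolding g_def h_def .
  have "[q1 = q2] (mod h)"
    by (rule cong_trans[OF j1 cong_trans[OF cg' cong_sym[OF j2]]])
  moreover have "int N = g * (int N div g)" unfolding g_def by simp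
  moreover have "coprime q1 g" "coprime q2 g" using rel_coprime[OF r1] rel_coprime[OF r2] by auto
  ultimately have r3: "((q1, g), (q2, g)) \<in> gamma0_rel N"
    using class_nf[OF gpos] unfolding h_def by blast
  have "((x1, y1), (x2, y2)) \<in> gamma0_rel N"
    using rel_trans[OF rel_trans[OF r1 r3] rel_sym[OF r2]] .
  then show ?thesis using cusps_class[OF P p1] cusps_class[OF Q p2] class_eq[of x1 y1 x2 y2 N] by simp
qed

lemma finite_cusps:
  assumes N: "N \<ge> 1"
  shows "finite (cusps N)"
proof -
  have "cusps N \<subseteq> (\<lambda>(x, g). gamma0_rel N `` {(x, g)}) ` ({0..int N} \<times> {0..int N})"
  proof
    fix P assume P: "P \<in> cusps N"
    obtain x y where xy: "(x, y) \<in> P" using cusps_ne[OF P] by auto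
    define g where "g = gcd y (int N)"
    obtain p where p: "(p, g) \<in> P" "coprime p g" using nf_mem[OF P N xy] unfolding g_def by metis
    have gpos: "g > 0" "g \<le> int N" using N unfolding g_def by (auto intro: gcd_le2_int)
    have r: "((p, g), (p mod g, g)) \<in> gamma0_rel N"
      by (rule relI'[OF p(2), where a=1 and b="- (p div g)" and c=0 and d=1])
         (auto simp: G0_def algebra_simps minus_div_mult_eq_mod[symmetric])
    have "P = gamma0_rel N `` {(p mod g, g)}" using cusps_class[OF P p(1)] class_eq[OF r] by simp
    moreover have "(p mod g, g) \<in> {0..int N} \<times> {0..int N}" using gpos
      by (auto simp: order.trans[OF less_imp_le[OF pos_mod_bound]])
    ultimately show "P \<in> (\<lambda>(x, g). gamma0_rel N `` {(x, g)}) ` ({0..int N} \<times> {0..int N})" by force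
  qed
  then show ?thesis by (rule finite_subset) auto
qed

lemma galois_exists:
  assumes N: "N \<ge> 1" and P: "P \<in> cusps N" and u: "coprime u (int N)"
  shows "\<exists>Q\<in>cusps N. galois_rel N u P Q"
proof -
  obtain x y where xy: "(x, y) \<in> P" using cusps_ne[OF P] by auto
  define g where "g = gcd y (int N)"
  obtain p where p: "(p, g) \<in> P" "coprime p g" using nf_mem[OF P N xy] unfolding g_def by metis
  have "coprime u g" unfolding g_def by (rule coprime_divisors[OF dvd_refl gcd_dvd2 u])
  then have cp: "coprime (u * p) g" using p(2) by simp
  show ?thesis
  proof (intro bexI)
    show "galois_rel N u P (gamma0_rel N `` {(u * p, g)})"
      unfolding galois_rel_def
      by (rule exI[of _ p], rule exI[of _ g], rule exI[of _ "u * p"]) (use p(1) class_self[OF cp] in simp)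
    show "gamma0_rel N `` {(u * p, g)} \<in> cusps N" by (rule class_in_cusps[OF cp])
  qed
qed

lemma galois_unique:
  assumes N: "N \<ge> 1" and P: "P \<in> cusps N" and Q1: "Q1 \<in> cusps N" and Q2: "Q2 \<in> cusps N"
    and g1: "galois_rel N u P Q1" and g2: "galois_rel N u P Q2"
  shows "Q1 = Q2"
proof -
  obtain x y x1 where a: "(x, y) \<in> P" "(x1, y) \<in> Q1" "[x1 = u * x] (mod int N)"
    using g1 unfolding galois_rel_def by blast
  obtain x' y' x2 where b: "(x', y') \<in> P" "(x2, y') \<in> Q2" "[x2 = u * x'] (mod int N)"
    using g2 unfolding galois_rel_def by blast
  have r: "((x, y), (x', y')) \<in> gamma0_rel N" using cusps_rel[OF P a(1) b(1)] .
  define g where "g = gcd y (int N)"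
  define h where "h = gcd g (int N div g)"
  have gg: "gcd y' (int N) = g" using rel_gcd[OF r] unfolding g_def .
  have hN: "h dvd int N" unfolding h_def g_def by (meson dvd_trans gcd_dvd1 gcd_dvd2)
  have hg: "h dvd g" "h dvd int N div g" unfolding h_def by auto
  have i: "[x' * (y' div g) = x * (y div g)] (mod h)"
    by (rule rel_inv[OF r N g_def hg])
  have c1: "[x1 * (y div g) = u * x * (y div g)] (mod h)"
    using cong_dvd_modulus[OF a(3) hN] by (rule cong_mult) simp
  have c2: "[x2 * (y' div g) = u * x' * (y' div g)] (mod h)"
    using cong_dvd_modulus[OF b(3) hN] by (rule cong_mult) simp
  have c3: "[u * x' * (y' div g) = u * x * (y div g)] (mod h)"
    using cong_scalar_left[OF i, of u] by (simp add: mult.assoc)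
  have "[x1 * (y div g) = x2 * (y' div g)] (mod h)"
    by (rule cong_trans[OF c1 cong_trans[OF cong_sym[OF c3] cong_sym[OF c2]]])
  then show ?thesis
    using cusps_eq[OF N Q1 Q2 a(2) b(2)] gg unfolding g_def h_def by simp
qed

lemma galois_sym:
  assumes g: "galois_rel N u P Q" and uv: "[u * v = 1] (mod int N)"
  shows "galois_rel N v Q P"
proof -
  obtain x y x' where a: "(x, y) \<in> P" "(x', y) \<in> Q" "[x' = u * x] (mod int N)"
    using g unfolding galois_rel_def by blast
  have "[v * x' = v * (u * x)] (mod int N)" using cong_scalar_left[OF a(3)] .
  moreover have "[v * (u * x) = x] (mod int N)"
    using cong_scalar_right[OF uv, of x] by (simp add: algebra_simps)
  ultimately have "[x = v * x'] (mod int N)" by (meson cong_sym cong_trans)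
  then show ?thesis unfolding galois_rel_def using a by blast
qed

lemma unit_inverse:
  assumes "coprime u (int N)"
  obtains v where "[u * v = 1] (mod int N)" "coprime v (int N)"
proof -
  obtain s t where st: "s * u + t * int N = 1" using bezout_int[of u "int N"] assms
    by (auto simp: coprime_iff_gcd_eq_1)
  have "u * s - 1 = int N * (- t)" using st by (simp add: algebra_simps)
  then have "[u * s = 1] (mod int N)" unfolding cong_iff_dvd_diff by (metis dvd_triv_left)
  moreover have "coprime s (int N)" using lin_coprime[of u s t "int N"] st by (simp add: mult.commute)
  ultimately show ?thesis using that by blast
qed

definition sigma :: "nat \<Rightarrow> int \<Rightarrow> (int \<times> int) set \<Rightarrow> (int \<times> int) set" where
  "sigma N u P = (THE Q. Q \<in> cusps N \<and> galois_rel N u P Q)"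

lemma sigma:
  assumes N: "N \<ge> 1" and P: "P \<in> cusps N" and u: "coprime u (int N)"
  shows "sigma N u P \<in> cusps N" "galois_rel N u P (sigma N u P)"
proof -
  obtain Q where Q: "Q \<in> cusps N" "galois_rel N u P Q" using galois_exists[OF N P u] by blast
  have "\<exists>!Q. Q \<in> cusps N \<and> galois_rel N u P Q"
  proof (rule ex1I[of _ Q])
    show "Q \<in> cusps N \<and> galois_rel N u P Q" using Q by simp
    fix Q' assume "Q' \<in> cusps N \<and> galois_rel N u P Q'"
    then show "Q' = Q" using galois_unique[OF N P _ Q(1) _ Q(2)] by blast
  qed
  then have "sigma N u P \<in> cusps N \<and> galois_rel N u P (sigma N u P)"
    unfolding sigma_def by (rule theI')
  then show "sigma N u P \<in> cusps N" "galois_rel N u P (sigma N u P)" by auto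
qed

lemma sigma_eq:
  assumes N: "N \<ge> 1" and P: "P \<in> cusps N" and u: "coprime u (int N)" and Q: "Q \<in> cusps N"
    and g: "galois_rel N u P Q"
  shows "sigma N u P = Q"
  using galois_unique[OF N P sigma(1)[OF N P u] Q sigma(2)[OF N P u] g] .

lemma sigma_inv:
  assumes N: "N \<ge> 1" and P: "P \<in> cusps N" and u: "coprime u (int N)"
    and uv: "[u * v = 1] (mod int N)" and v: "coprime v (int N)"
  shows "sigma N v (sigma N u P) = P"
  using sigma_eq[OF N sigma(1)[OF N P u] v P galois_sym[OF sigma(2)[OF N P u] uv]] .


definition lift :: "nat \<Rightarrow> int \<times> int \<Rightarrow> int \<times> int" where
  "lift l p = (if int l dvd snd p then (fst p, snd p div int l) else (int l * fst p, snd p))"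

lemma prime_int: "Factorial_Ring.prime (l::nat) \<Longrightarrow> Factorial_Ring.prime (int l)"
  by simp

lemma lift_eq:
  assumes l: "Factorial_Ring.prime l" and cp: "coprime x y"
  shows "(int l * x div gcd (int l * x) y, y div gcd (int l * x) y) = lift l (x, y)"
proof -
  have lp: "Factorial_Ring.prime (int l)" using l by simp
  have g: "gcd (int l * x) y = gcd (int l) y"
    using cp by (simp add: gcd_mult_left_right_cancel coprime_commute)
  show ?thesis
  proof (cases "int l dvd y")
    case True
    then have "gcd (int l) y = int l" by simp
    then show ?thesis using True g lp unfolding lift_def by (auto simp: prime_gt_0_int)
  next
    case False
    then have "coprime (int l) y" using prime_imp_coprime[OF lp] by blast
    then have "gcd (int l) y = 1" by simp
    then show ?thesis using False g unfolding lift_def by auto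
  qed
qed

lemma lift_coprime:
  assumes l: "Factorial_Ring.prime l" and cp: "coprime x y"
  shows "coprime (fst (lift l (x, y))) (snd (lift l (x, y)))"
proof (cases "int l dvd y")
  case True
  then obtain z where z: "y = int l * z" by (auto elim: dvdE)
  have lpos: "int l > 0" using l prime_gt_0_nat by simp
  have "coprime x z" using cp z by simp
  then show ?thesis using True z lpos unfolding lift_def by simp
next
  case False
  then have "coprime (int l) y" using prime_imp_coprime[of "int l"] l by simp
  then show ?thesis using False cp unfolding lift_def by simp
qed

lemma lift_rel:
  assumes l: "Factorial_Ring.prime l" and r: "((x, y), (x', y')) \<in> gamma0_rel (M * l)"
  shows "(lift l (x, y), lift l (x', y')) \<in> gamma0_rel M"
proof -
  obtain a b c d where G: "G0 (M * l) a b c d" "x' = a * x + b * y" "y' = c * x + d * y"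
    "coprime x y" "coprime x' y'" using relE[OF r] by metis
  obtain c0 where c: "c = int M * int l * c0" using G(1) unfolding G0_def by auto
  have det: "a * d - b * c = 1" using G(1) unfolding G0_def by simp
  have lp: "Factorial_Ring.prime (int l)" using l by simp
  have lpos: "int l > 0" using l prime_gt_0_nat by simp
  have G': "G0 M a (int l * b) (int M * c0) d" using det c unfolding G0_def by (simp add: algebra_simps)
  have cpl: "coprime (int l) d"
    using lin_coprime[of "- b * int M * c0" "int l" a d] det c by (simp add: algebra_simps)
  have iff: "int l dvd y' \<longleftrightarrow> int l dvd y"
  proof -
    have "y' = int l * (int M * c0 * x) + d * y" using G(3) c by (simp add: algebra_simps)
    then have "int l dvd y' \<longleftrightarrow> int l dvd d * y" by (simp add: dvd_add_right_iff)
    also have "\<dots> \<longleftrightarrow> int l dvd y" using cpl by (simp add: coprime_dvd_mult_right_iff)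
    finally show ?thesis .
  qed
  show ?thesis
  proof (cases "int l dvd y")
    case True
    then obtain z where z: "y = int l * z" by (auto elim: dvdE)
    have y'l: "int l dvd y'" using iff True by simp
    have cpz: "coprime x z" using G(4) z by simp
    have e1: "lift l (x, y) = (x, z)" using True z lpos unfolding lift_def by simp
    have e2: "lift l (x', y') = (a * x + (int l * b) * z, int M * c0 * x + d * z)"
    proof -
      have "y' = int l * (int M * c0 * x + d * z)" using G(3) c z by (simp add: algebra_simps)
      then show ?thesis using y'l G(2) z lpos unfolding lift_def by (simp add: algebra_simps)
    qed
    show ?thesis unfolding e1 e2 by (rule relI[OF cpz G'])
  next
    case False
    have y'l: "\<not> int l dvd y'" using iff False by simp
    have cpz: "coprime (int l * x) y" using lift_coprime[OF l G(4)] False unfolding lift_def by simp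
    have e1: "lift l (x, y) = (int l * x, y)" using False unfolding lift_def by simp
    have e2: "lift l (x', y') = (a * (int l * x) + (int l * b) * y, int M * c0 * (int l * x) + d * y)"
      using y'l G(2,3) c unfolding lift_def by (simp add: algebra_simps)
    show ?thesis unfolding e1 e2 by (rule relI[OF cpz G'])
  qed
qed

lemma beta_cusp_lift:
  assumes l: "Factorial_Ring.prime l" and P: "P \<in> cusps (M * l)" and xy: "(x, y) \<in> P"
  shows "beta_cusp l M P = gamma0_rel M `` {lift l (x, y)}"
proof -
  obtain x0 y0 where s: "(SOME p. p \<in> P) = (x0, y0)" by (cases "SOME p. p \<in> P") auto
  have m: "(x0, y0) \<in> P" using some_in[OF P] s by simp
  have cp0: "coprime x0 y0" using cusps_coprime[OF P m] .
  have "beta_cusp l M P = gamma0_rel M `` {lift l (x0, y0)}"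
    unfolding beta_cusp_def s using lift_eq[OF l cp0] by (simp add: Let_def)
  also have "\<dots> = gamma0_rel M `` {lift l (x, y)}"
  proof -
    have r: "((x0, y0), (x, y)) \<in> gamma0_rel (M * l)" using cusps_rel[OF P m xy] .
    have "(lift l (x0, y0), lift l (x, y)) \<in> gamma0_rel M" using lift_rel[OF l r] .
    moreover obtain a1 b1 where "lift l (x0, y0) = (a1, b1)" by (cases "lift l (x0, y0)") auto
    moreover obtain a2 b2 where "lift l (x, y) = (a2, b2)" by (cases "lift l (x, y)") auto
    ultimately show ?thesis using class_eq[of a1 b1 a2 b2 M] by simp
  qed
  finally show ?thesis .
qed

lemma lift_class_in:
  assumes l: "Factorial_Ring.prime l" and cp: "coprime x y"
  shows "gamma0_rel M `` {lift l (x, y)} \<in> cusps M" "lift l (x, y) \<in> gamma0_rel M `` {lift l (x, y)}"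
  using class_in_cusps[OF lift_coprime[OF l cp]] class_self[OF lift_coprime[OF l cp]] by auto

lemma beta_in_cusps:
  assumes l: "Factorial_Ring.prime l" and P: "P \<in> cusps (M * l)"
  shows "beta_cusp l M P \<in> cusps M"
proof -
  obtain x y where xy: "(x, y) \<in> P" using cusps_ne[OF P] by auto
  show ?thesis using beta_cusp_lift[OF l P xy] lift_class_in(1)[OF l cusps_coprime[OF P xy]] by simp
qed

lemma beta_galois:
  assumes l: "Factorial_Ring.prime l" and P: "P \<in> cusps (M * l)" and P': "P' \<in> cusps (M * l)"
    and g: "galois_rel (M * l) u P P'"
  shows "galois_rel M u (beta_cusp l M P) (beta_cusp l M P')"
proof -
  obtain x y x' where a: "(x, y) \<in> P" "(x', y) \<in> P'" "[x' = u * x] (mod int (M * l))"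
    using g unfolding galois_rel_def by blast
  have cM: "[x' = u * x] (mod int M)"
    using cong_dvd_modulus[OF a(3), of "int M"] by simp
  have m1: "lift l (x, y) \<in> beta_cusp l M P"
    using beta_cusp_lift[OF l P a(1)] lift_class_in(2)[OF l cusps_coprime[OF P a(1)]] by simp
  have m2: "lift l (x', y) \<in> beta_cusp l M P'"
    using beta_cusp_lift[OF l P' a(2)] lift_class_in(2)[OF l cusps_coprime[OF P' a(2)]] by simp
  show ?thesis
  proof (cases "int l dvd y")
    case True
    have "(x, y div int l) \<in> beta_cusp l M P" "(x', y div int l) \<in> beta_cusp l M P'"
      using m1 m2 True unfolding lift_def by auto
    then show ?thesis unfolding galois_rel_def
      by (rule_tac exI[of _ x], rule_tac exI[of _ "y div int l"], rule_tac exI[of _ x']) (use cM in simp)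
  next
    case False
    have "(int l * x, y) \<in> beta_cusp l M P" "(int l * x', y) \<in> beta_cusp l M P'"
      using m1 m2 False unfolding lift_def by auto
    moreover have "[int l * x' = u * (int l * x)] (mod int M)"
      using cong_scalar_left[OF cM, of "int l"] by (simp add: algebra_simps)
    ultimately show ?thesis unfolding galois_rel_def
      by (rule_tac exI[of _ "int l * x"], rule_tac exI[of _ y], rule_tac exI[of _ "int l * x'"]) simp
  qed
qed


lemma Ml_ge: "M \<ge> 1 \<Longrightarrow> Factorial_Ring.prime (l::nat) \<Longrightarrow> M * l \<ge> 1"
  using prime_gt_0_nat[of l] by (simp add: Suc_le_eq)

lemma push_degree:
  assumes M: "M \<ge> 1" and l: "Factorial_Ring.prime l"
  shows "(\<Sum>Q\<in>cusps M. beta_push l M D Q) = (\<Sum>P\<in>cusps (M * l). D P)"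
proof -
  have fN: "finite (cusps (M * l))" using finite_cusps[OF Ml_ge[OF M l]] .
  have fM: "finite (cusps M)" using finite_cusps[OF M] .
  have "(\<Sum>Q\<in>cusps M. beta_push l M D Q) = (\<Sum>Q\<in>cusps M. \<Sum>P\<in>{P. P \<in> cusps (M * l) \<and> beta_cusp l M P = Q}. D P)"
    unfolding beta_push_def by (rule sum.cong) auto
  also have "\<dots> = (\<Sum>P\<in>cusps (M * l). D P)"
    by (rule sum.group[OF fN fM]) (use beta_in_cusps[OF l] in blast)
  finally show ?thesis .
qed

lemma push_galois:
  assumes M: "M \<ge> 1" and l: "Factorial_Ring.prime l" and D: "D \<in> rat_cusp_div0 (M * l)"
    and Q: "Q \<in> cusps M" and Q': "Q' \<in> cusps M" and u: "coprime u (int M)"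
    and g: "galois_rel M u Q Q'"
  shows "beta_push l M D Q = beta_push l M D Q'"
proof -
  have N: "M * l \<ge> 1" using Ml_ge[OF M l] .
  have Mne: "int (M * l) \<noteq> 0" using N by simp
  obtain k where k: "coprime (u + k * int M) (int (M * l))"
    using prime_avoid[OF Mne u] by blast
  define u' where "u' = u + k * int M"
  have u': "coprime u' (int (M * l))" using k unfolding u'_def .
  have u'M: "coprime u' (int M)" using u' by simp
  have g': "galois_rel M u' Q Q'"
  proof -
    obtain x y x' where a: "(x, y) \<in> Q" "(x', y) \<in> Q'" "[x' = u * x] (mod int M)"
      using g unfolding galois_rel_def by blast
    have "[u * x = u' * x] (mod int M)" unfolding u'_def
      by (simp add: cong_iff_dvd_diff algebra_simps)
    then have "[x' = u' * x] (mod int M)" using a(3) by (rule cong_trans[rotated])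
    then show ?thesis unfolding galois_rel_def
      by (rule_tac exI[of _ x], rule_tac exI[of _ y], rule_tac exI[of _ x']) (use a in simp)
  qed
  obtain v where v: "[u' * v = 1] (mod int (M * l))" "coprime v (int (M * l))"
    using unit_inverse[OF u'] by blast
  have vu: "[v * u' = 1] (mod int (M * l))" using v(1) by (simp add: mult.commute)
  have vM: "[u' * v = 1] (mod int M)" using cong_dvd_modulus[OF v(1), of "int M"] by simp
  define S where "S = {P \<in> cusps (M * l). beta_cusp l M P = Q}"
  define T where "T = {P \<in> cusps (M * l). beta_cusp l M P = Q'}"
  have DP: "\<And>P P'. P \<in> cusps (M * l) \<Longrightarrow> P' \<in> cusps (M * l) \<Longrightarrow> galois_rel (M * l) u' P P' \<Longrightarrow> D P = D P'"
    using D u' unfolding rat_cusp_div0_def by blast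
  have "(\<Sum>P\<in>S. D P) = (\<Sum>P\<in>T. D P)"
  proof (rule sum.reindex_bij_witness[where i="sigma (M * l) v" and j="sigma (M * l) u'"])
    fix P assume P: "P \<in> S"
    then have Pc: "P \<in> cusps (M * l)" and bP: "beta_cusp l M P = Q" unfolding S_def by auto
    show "sigma (M * l) v (sigma (M * l) u' P) = P" by (rule sigma_inv[OF N Pc u' v])
    have sc: "sigma (M * l) u' P \<in> cusps (M * l)" using sigma(1)[OF N Pc u'] .
    have "galois_rel M u' Q (beta_cusp l M (sigma (M * l) u' P))"
      using beta_galois[OF l Pc sc sigma(2)[OF N Pc u']] bP by simp
    then have "beta_cusp l M (sigma (M * l) u' P) = Q'"
      using galois_unique[OF M Q beta_in_cusps[OF l sc] Q' _ g'] by blast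
    then show "sigma (M * l) u' P \<in> T" unfolding T_def using sc by simp
    show "D (sigma (M * l) u' P) = D P"
      using DP[OF Pc sc sigma(2)[OF N Pc u']] by simp
  next
    fix P assume P: "P \<in> T"
    then have Pc: "P \<in> cusps (M * l)" and bP: "beta_cusp l M P = Q'" unfolding T_def by auto
    show "sigma (M * l) u' (sigma (M * l) v P) = P" by (rule sigma_inv[OF N Pc v(2) vu u'])
    have sc: "sigma (M * l) v P \<in> cusps (M * l)" using sigma(1)[OF N Pc v(2)] .
    have "galois_rel M v Q' (beta_cusp l M (sigma (M * l) v P))"
      using beta_galois[OF l Pc sc sigma(2)[OF N Pc v(2)]] bP by simp
    moreover have "galois_rel M v Q' Q" using galois_sym[OF g' vM] .
    ultimately have "beta_cusp l M (sigma (M * l) v P) = Q"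
      using galois_unique[OF M Q' beta_in_cusps[OF l sc] Q] by blast
    then show "sigma (M * l) v P \<in> S" unfolding S_def using sc by simp
  qed
  then show ?thesis unfolding beta_push_def S_def T_def using Q Q' by simp
qed

lemma push_rat:
  assumes M: "M \<ge> 1" and l: "Factorial_Ring.prime l" and D: "D \<in> rat_cusp_div0 (M * l)"
  shows "beta_push l M D \<in> rat_cusp_div0 M"
  unfolding rat_cusp_div0_def
proof (intro CollectI conjI allI impI ballI)
  fix P assume "P \<notin> cusps M" then show "beta_push l M D P = 0" unfolding beta_push_def by simp
next
  show "(\<Sum>P\<in>cusps M. beta_push l M D P) = 0"
    using push_degree[OF M l] D unfolding rat_cusp_div0_def by simp
next
  fix u P Q assume "coprime u (int M)" "P \<in> cusps M" "Q \<in> cusps M" "galois_rel M u P Q"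
  then show "beta_push l M D P = beta_push l M D Q" using push_galois[OF M l D] by blast
qed

lemma push_add: "beta_push l M (\<lambda>P. D P + E P) = (\<lambda>Q. beta_push l M D Q + beta_push l M E Q)"
  unfolding beta_push_def by (auto simp: sum.distrib)

lemma push_scale: "beta_push l M (\<lambda>P. t * D P) = (\<lambda>Q. t * beta_push l M D Q)"
  unfolding beta_push_def by (auto simp: sum_distrib_left)

lemma push_zero: "beta_push l M (\<lambda>P. 0) = (\<lambda>Q. 0)"
  unfolding beta_push_def by auto


lemma coprime_shift:
  fixes x y b L :: int
  assumes "coprime x y" "L dvd y"
  shows "coprime (x + b * y) (L * y)"
proof (rule coprimeI)
  fix k assume k1: "k dvd x + b * y" and k2: "k dvd L * y"
  have "gcd y (x + b * y) = gcd y x" using gcd_add_mult[of y b x] by (simp add: add.commute)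
  then have "coprime (x + b * y) y" using assms(1)
    by (simp add: coprime_iff_gcd_eq_1 gcd.commute)
  moreover have "coprime (x + b * y) L"
  proof (rule coprimeI)
    fix q assume q1: "q dvd x + b * y" and q2: "q dvd L"
    have "q dvd y" using q2 assms(2) by (rule dvd_trans)
    then have "q dvd x" using q1 by (metis dvd_add_left_iff dvd_mult)
    then show "is_unit q" using \<open>q dvd y\<close> assms(1) coprime_common_divisor by blast
  qed
  ultimately have "coprime (x + b * y) (L * y)" by simp
  then show "is_unit k" using k1 k2 coprime_common_divisor by blast
qed

lemma U0:
  fixes z y1 x' y' :: int
  assumes l: "Factorial_Ring.prime l" and cz: "coprime z y1" and ny: "\<not> int l dvd y1"
    and r: "((int l * z, y1), (int l * x', y')) \<in> gamma0_rel M"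
  shows "((z, y1), (x', y')) \<in> gamma0_rel (M * l)"
proof -
  obtain a b c d where G: "G0 M a b c d" "int l * x' = a * (int l * z) + b * y1" "y' = c * (int l * z) + d * y1"
    using relE[OF r] by metis
  have lp: "Factorial_Ring.prime (int l)" using l by simp
  have lpos: "int l > 0" using l prime_gt_0_nat by simp
  have "int l dvd b * y1"
  proof -
    have "b * y1 = int l * (x' - a * z)" using G(2) by (simp add: algebra_simps)
    then show ?thesis by simp
  qed
  then have "int l dvd b" using ny lp prime_dvd_mult_iff by blast
  then obtain b1 where b1: "b = int l * b1" by (auto elim: dvdE)
  have det: "a * d - b * c = 1" "int M dvd c" using G(1) unfolding G0_def by auto
  have G': "G0 (M * l) a b1 (c * int l) d" using det b1 unfolding G0_def
    by (auto simp: algebra_simps mult_dvd_mono)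
  have x': "x' = a * z + b1 * y1"
  proof -
    have "int l * x' = int l * (a * z + b1 * y1)" using G(2) b1 by (simp add: algebra_simps)
    then show ?thesis using lpos by simp
  qed
  show ?thesis by (rule relI'[OF cz G' x']) (simp add: G(3) algebra_simps)
qed

lemma U1:
  fixes x y x' z' m :: int
  assumes l: "Factorial_Ring.prime l" and cp: "coprime x y" and ly: "int l dvd y" and lM: "int l dvd int M"
    and Ay: "int l ^ A dvd y ^ 2" and Mm: "int M = int l ^ A * m" and cm: "coprime m (int l)"
    and r: "((x, y), (x', z')) \<in> gamma0_rel M"
  shows "((x, int l * y), (x', int l * z')) \<in> gamma0_rel (M * l)"
proof -
  define L where "L = int l"
  obtain a b c d where G: "G0 M a b c d" "x' = a * x + b * y" "z' = c * x + d * y"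
    using relE[OF r] by metis
  have det: "a * d - b * c = 1" and Mc: "int M dvd c" using G(1) unfolding G0_def by auto
  have Lc: "L dvd c" using lM Mc unfolding L_def by (rule dvd_trans)
  then obtain c' where c': "c = L * c'" by (auto elim: dvdE)
  have ca: "coprime a L" using lin_coprime[of d a "- b * c'" L] det c' by (simp add: algebra_simps)
  have cx: "coprime x L" using cp ly unfolding L_def by (meson coprime_divisors dvd_refl)
  have "coprime (a * m * x ^ 2) L" using ca cm cx unfolding L_def by simp
  then obtain s r0 where sr: "s * (a * m * x ^ 2) + r0 * L = 1"
    using bezout_int[of "a * m * x ^ 2" L] by (auto simp: coprime_iff_gcd_eq_1)
  define n where "n = m * (- b * s)"
  define A' where "A' = a * (1 - n * x * y) - b * n * y ^ 2"
  define B' where "B' = a * n * x ^ 2 + b * (1 + n * x * y)"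
  define C' where "C' = c * (1 - n * x * y) - d * n * y ^ 2"
  define D' where "D' = c * n * x ^ 2 + d * (1 + n * x * y)"
  obtain y1 where y1: "y = L * y1" using ly unfolding L_def by (auto elim: dvdE)
  have B'L: "B' = L * (b * r0 + b * n * x * y1)"
  proof -
    have "B' = b * (1 - s * (a * m * x ^ 2)) + b * n * x * y" unfolding B'_def n_def
      by (simp add: algebra_simps power2_eq_square)
    also have "\<dots> = b * (r0 * L) + b * n * x * (L * y1)"
    proof -
      have h: "1 - s * (a * m * x ^ 2) = r0 * L" using sr by linarith
      show ?thesis unfolding h y1 ..
    qed
    finally show ?thesis by (simp add: algebra_simps)
  qed
  obtain q where q: "y ^ 2 = L ^ A * q" using Ay unfolding L_def by (auto elim: dvdE)
  have MC': "int M dvd C'"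
  proof -
    have "d * n * y ^ 2 = int M * (d * (- b * s) * q)" unfolding n_def q Mm L_def by (simp add: algebra_simps)
    then have "int M dvd d * n * y ^ 2" by simp
    moreover have "int M dvd c * (1 - n * x * y)" using Mc by simp
    ultimately show ?thesis unfolding C'_def by simp
  qed
  have detS: "A' * D' - B' * C' = 1"
  proof -
    have "A' * D' - B' * C' = (a * d - b * c) * ((1 - n * x * y) * (1 + n * x * y) + (n * x ^ 2) * (n * y ^ 2))"
      unfolding A'_def B'_def C'_def D'_def by (simp add: algebra_simps power2_eq_square)
    also have "\<dots> = 1" using det by (simp add: algebra_simps power2_eq_square)
    finally show ?thesis .
  qed
  have ex: "A' * x + B' * y = x'" unfolding A'_def B'_def G(2) by (simp add: algebra_simps power2_eq_square)
  have ey: "C' * x + D' * y = z'" unfolding C'_def D'_def G(3) by (simp add: algebra_simps power2_eq_square)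
  define B1 where "B1 = b * r0 + b * n * x * y1"
  have G': "G0 (M * l) A' B1 (C' * L) D'"
    unfolding G0_def using detS B'L MC' unfolding B1_def L_def
    by (auto simp: algebra_simps mult_dvd_mono)
  have cp': "coprime x (L * y)" using coprime_shift[OF cp, of L 0] ly unfolding L_def by simp
  show ?thesis unfolding L_def[symmetric]
  proof (rule relI'[OF cp' G'])
    show "x' = A' * x + B1 * (L * y)" using ex B'L unfolding B1_def by (simp add: algebra_simps)
    show "L * z' = C' * L * x + D' * (L * y)" using ey by (simp add: algebra_simps flip: ey)
  qed
qed

lemma U2:
  fixes x y x' z' :: int
  assumes l: "Factorial_Ring.prime l" and cp: "coprime x y" and ly: "int l dvd y" and lM: "int l dvd int M"
    and r: "((x, y), (x', z')) \<in> gamma0_rel M"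
  shows "\<exists>b\<in>{0..<int l}. ((x + b * y, int l * y), (x', int l * z')) \<in> gamma0_rel (M * l)"
proof -
  define L where "L = int l"
  have lpos: "L > 0" unfolding L_def using l prime_gt_0_nat by simp
  obtain a b0 c d where G: "G0 M a b0 c d" "x' = a * x + b0 * y" "z' = c * x + d * y"
    using relE[OF r] by metis
  have det: "a * d - b0 * c = 1" and Mc: "int M dvd c" using G(1) unfolding G0_def by auto
  have Lc: "L dvd c" using lM Mc unfolding L_def by (rule dvd_trans)
  then obtain c' where c': "c = L * c'" by (auto elim: dvdE)
  have ca: "coprime a L" using lin_coprime[of d a "- b0 * c'" L] det c' by (simp add: algebra_simps)
  obtain s r0 where sr: "s * a + r0 * L = 1"
    using bezout_int[of a L] ca by (auto simp: coprime_iff_gcd_eq_1)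
  define b where "b = (b0 * s) mod L"
  have b: "b \<in> {0..<L}" unfolding b_def using lpos by simp
  obtain q' where bq: "b = b0 * s - L * q'" unfolding b_def
    by (metis minus_div_mult_eq_mod mult.commute)
  define e where "e = b0 * r0 + a * q'"
  have eL: "b0 - a * b = L * e"
  proof -
    have "b0 - a * b = b0 * (1 - s * a) + a * L * q'" unfolding bq by (simp add: algebra_simps)
    also have "\<dots> = b0 * (r0 * L) + a * L * q'"
    proof -
      have h: "1 - s * a = r0 * L" using sr by linarith
      show ?thesis unfolding h ..
    qed
    finally show ?thesis unfolding e_def by (simp add: algebra_simps)
  qed
  have G': "G0 (M * l) a e (c * L) (d - c * b)"
  proof -
    have "L * (a * (d - c * b) - e * (c * L)) = L * (a * d - b0 * c)"
      using eL by (simp add: algebra_simps)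
    then have "a * (d - c * b) - e * (c * L) = 1" using det lpos by simp
    then show ?thesis unfolding G0_def L_def using Mc by (simp add: mult_dvd_mono)
  qed
  have cp': "coprime (x + b * y) (L * y)" using coprime_shift[OF cp, of L b] ly unfolding L_def by simp
  have "((x + b * y, L * y), (x', L * z')) \<in> gamma0_rel (M * l)"
  proof (rule relI'[OF cp' G'])
    have "a * (x + b * y) + e * (L * y) = a * x + (a * b + L * e) * y" by (simp add: algebra_simps)
    also have "\<dots> = x'" using eL G(2) by (simp add: algebra_simps)
    finally show "x' = a * (x + b * y) + e * (L * y)" by simp
    show "L * z' = c * L * (x + b * y) + (d - c * b) * (L * y)" using G(3) by (simp add: algebra_simps)
  qed
  then show ?thesis using b unfolding L_def by blast
qed


lemma dvd_small_zero:
  fixes L k :: int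
  assumes "L dvd k" "\<bar>k\<bar> < L"
  shows "k = 0"
proof (rule ccontr)
  assume "k \<noteq> 0"
  then have "\<bar>L\<bar> \<le> \<bar>k\<bar>" using dvd_imp_le_int assms(1) by blast
  then show False using assms(2) by simp
qed

lemma D2:
  fixes x y :: int
  assumes l: "Factorial_Ring.prime l" and M: "M \<ge> 1" and cp: "coprime x y" and ly: "int l dvd y" and y0: "y \<noteq> 0"
    and LA: "int l ^ A dvd int M" and bad: "\<not> int l ^ A dvd (gcd y (int M)) ^ 2"
    and b: "b \<in> {0..<int l}" and b': "b' \<in> {0..<int l}"
    and r: "((x + b * y, int l * y), (x + b' * y, int l * y)) \<in> gamma0_rel (M * l)"
  shows "b = b'"
proof -
  define L where "L = int l"
  have lp: "Factorial_Ring.prime L" unfolding L_def using l by simp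
  have Lpos: "L > 0" unfolding L_def using l prime_gt_0_nat by simp
  have Lnu: "\<not> is_unit L" using lp not_prime_unit by blast
  define G where "G = gcd y (int M)"
  have Gpos: "G > 0" unfolding G_def using M by simp
  obtain y0 where yd: "y = L ^ multiplicity L y * y0" "\<not> L dvd y0" by (rule multiplicity_decompose'[OF y0 Lnu])
  define j where "j = multiplicity L y"
  have yj: "y = L ^ j * y0" using yd unfolding j_def by simp
  have GM: "G dvd int M" unfolding G_def by simp
  have jA: "j < A"
  proof (rule ccontr)
    assume "\<not> j < A"
    then have "L ^ A dvd L ^ j" by (simp add: le_imp_power_dvd)
    moreover have "L ^ j dvd y" using yj by simp
    ultimately have "L ^ A dvd y" by (rule dvd_trans)
    then have "L ^ A dvd G" unfolding G_def using LA L_def by simp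
    then have "L ^ A dvd G ^ 2" by (simp add: power2_eq_square)
    then show False using bad unfolding G_def L_def by simp
  qed
  have LjM: "L ^ j dvd int M" using dvd_trans[OF le_imp_power_dvd[of j A L] LA[folded L_def]] jA by simp
  obtain M' where M': "int M = L ^ j * M'" using LjM by (auto elim: dvdE)
  define G0 where "G0 = gcd y0 M'"
  have GG0: "G = L ^ j * G0"
  proof -
    have "G = gcd (L ^ j * y0) (L ^ j * M')" unfolding G_def using yj M' by simp
    also have "\<dots> = normalize (L ^ j * G0)" unfolding G0_def by (rule gcd_mult_left)
    also have "\<dots> = L ^ j * G0" using Lpos unfolding G0_def by (simp add: abs_mult)
    finally show ?thesis .
  qed
  have G0y0: "G0 dvd y0" unfolding G0_def by simp
  have nG0: "\<not> L dvd G0" using G0y0 yd(2) dvd_trans by blast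
  have j2A: "2 * j + 1 \<le> A"
  proof (rule ccontr)
    assume "\<not> 2 * j + 1 \<le> A"
    then have "L ^ A dvd L ^ (2 * j)" by (simp add: le_imp_power_dvd)
    moreover have "G ^ 2 = L ^ (2 * j) * G0 ^ 2" unfolding GG0 by (simp add: power_mult_distrib power_mult mult.commute)
    ultimately have "L ^ A dvd G ^ 2" by simp
    then show False using bad unfolding G_def L_def by simp
  qed
  define m where "m = L ^ (j + 1)"
  define gN where "gN = gcd (L * y) (int (M * l))"
  have gN: "gN = L * G"
  proof -
    have "gN = gcd (L * y) (L * int M)" unfolding gN_def L_def by (simp add: mult.commute)
    also have "\<dots> = normalize (L * G)" unfolding G_def by (rule gcd_mult_left)
    also have "\<dots> = L * G" using Lpos Gpos by (simp add: abs_mult)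
    finally show ?thesis .
  qed
  have m1: "m dvd gN" unfolding gN GG0 m_def by (simp add: mult.assoc)
  have m2: "m dvd int (M * l) div gN"
  proof -
    have c1: "L ^ (2 * j + 1) dvd int M" using dvd_trans[OF le_imp_power_dvd[OF j2A, of L] LA[folded L_def]] .
    have "G0 dvd G" using GG0 by simp
    then have c2: "G0 dvd int M" using GM by (rule dvd_trans)
    have "coprime L G0" using prime_imp_coprime[OF lp nG0] .
    then have c3: "coprime (L ^ (2 * j + 1)) G0" by simp
    have "L ^ (2 * j + 1) * G0 dvd int M" using divides_mult[OF c1 c2 c3] .
    moreover have "L ^ (2 * j + 1) * G0 = m * G"
    proof -
      have e: "2 * j + 1 = (j + 1) + j" by simp
      have "L ^ (2 * j + 1) = L ^ (j + 1) * L ^ j" unfolding e power_add ..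
      then show ?thesis unfolding m_def GG0 by (simp add: algebra_simps)
    qed
    ultimately obtain k where k: "int M = m * G * k" by (auto elim: dvdE)
    have "int (M * l) div gN = (L * G * (m * k)) div (L * G)" unfolding gN using k L_def by (simp add: algebra_simps)
    also have "\<dots> = m * k" using Lpos Gpos by simp
    finally show ?thesis by simp
  qed
  have inv: "[(x + b' * y) * (L * y div gN) = (x + b * y) * (L * y div gN)] (mod m)"
    by (rule rel_inv[OF r[folded L_def] Ml_ge[OF M l] _ m1 m2]) (simp add: gN_def)
  define w where "w = y0 div G0"
  have y0w: "y0 = G0 * w" unfolding w_def using G0y0 by simp
  have nw: "\<not> L dvd w"
  proof
    assume "L dvd w"
    then have "L dvd G0 * w" by (rule dvd_mult)
    then show False using y0w yd(2) by simp
  qed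
  have G0pos: "G0 \<noteq> 0" using GG0 Gpos by auto
  have Lyg: "L * y div gN = w"
  proof -
    have "L * y = (L * G) * w" unfolding GG0 yj y0w by (simp add: algebra_simps)
    then show ?thesis unfolding gN using Lpos Gpos by simp
  qed
  have "m dvd (x + b' * y) * w - (x + b * y) * w" using inv unfolding Lyg cong_iff_dvd_diff .
  moreover have "(x + b' * y) * w - (x + b * y) * w = L ^ j * ((b' - b) * y0 * w)" unfolding yj
    by (simp add: algebra_simps)
  ultimately have "L ^ j * L dvd L ^ j * ((b' - b) * y0 * w)" unfolding m_def by (simp add: mult.commute)
  then have "L dvd (b' - b) * y0 * w" using Lpos by simp
  then have "L dvd (b' - b)" using lp yd(2) nw by (simp add: prime_dvd_mult_iff)
  moreover have "\<bar>b' - b\<bar> < L" using b b' unfolding L_def by auto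
  ultimately have "b' - b = 0" by (rule dvd_small_zero)
  then show "b = b'" by simp
qed


definition W :: "nat \<Rightarrow> nat \<Rightarrow> int \<Rightarrow> int \<Rightarrow> int" where
  "W l A t g = (if \<not> int l dvd g then t else if \<not> int l ^ 2 dvd g then 0
               else if int l ^ (A + 2) dvd g ^ 2 then t else 1)"

definition wP :: "nat \<Rightarrow> nat \<Rightarrow> nat \<Rightarrow> int \<Rightarrow> (int \<times> int) set \<Rightarrow> int" where
  "wP l M A t P = W l A t (gcd (snd (SOME p. p \<in> P)) (int (M * l)))"

lemma wP_rep:
  assumes P: "P \<in> cusps (M * l)" and xy: "(x, y) \<in> P"
  shows "wP l M A t P = W l A t (gcd y (int (M * l)))"
proof -
  obtain x0 y0 where s: "(SOME p. p \<in> P) = (x0, y0)" by (cases "SOME p. p \<in> P") auto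
  have m: "(x0, y0) \<in> P" using some_in[OF P] s by simp
  have "gcd y0 (int (M * l)) = gcd y (int (M * l))" using rel_gcd[OF cusps_rel[OF P xy m]] .
  then show ?thesis unfolding wP_def s by simp
qed

lemma gcd_N_lift:
  assumes l: "Factorial_Ring.prime l" and ly: "int l dvd y"
  shows "gcd y (int (M * l)) = int l * gcd (y div int l) (int M)"
proof -
  have lpos: "int l > 0" using l prime_gt_0_nat by simp
  obtain z where z: "y = int l * z" using ly by (auto elim: dvdE)
  have "gcd y (int (M * l)) = gcd (int l * z) (int l * int M)" using z by (simp add: mult.commute)
  also have "\<dots> = normalize (int l * gcd z (int M))" by (rule gcd_mult_left)
  also have "\<dots> = int l * gcd z (int M)" using lpos by (simp add: abs_mult)
  finally show ?thesis using z lpos by simp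
qed

lemma lift_in_beta:
  assumes l: "Factorial_Ring.prime l" and P: "P \<in> cusps (M * l)" and xy: "(x, y) \<in> P"
  shows "lift l (x, y) \<in> beta_cusp l M P"
  using beta_cusp_lift[OF l P xy] lift_class_in(2)[OF l cusps_coprime[OF P xy]] by simp

lemma beta_class:
  assumes l: "Factorial_Ring.prime l" and cp: "coprime x y"
  shows "beta_cusp l M (gamma0_rel (M * l) `` {(x, y)}) = gamma0_rel M `` {lift l (x, y)}"
  using beta_cusp_lift[OF l class_in_cusps[OF cp] class_self[OF cp]] .

lemma lift_nd: "\<not> int l dvd y \<Longrightarrow> lift l (x, y) = (int l * x, y)"
  unfolding lift_def by simp

lemma lift_d: "int l dvd y \<Longrightarrow> lift l (x, y) = (x, y div int l)"
  unfolding lift_def by simp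

lemma same_class:
  assumes "P \<in> cusps N" "Q \<in> cusps N" "p \<in> P" "q \<in> Q" "(p, q) \<in> gamma0_rel N"
  shows "P = Q"
proof -
  have "P = gamma0_rel N `` {p}" "Q = gamma0_rel N `` {q}" using cusps_class assms by blast+
  then show ?thesis using equiv_class_eq[OF equiv_rel assms(5)] by simp
qed


lemma W_L_nd:
  assumes l: "Factorial_Ring.prime l" and "\<not> int l dvd g"
  shows "W l A t (int l * g) = 0"
proof -
  have lpos: "int l > 0" using l prime_gt_0_nat by simp
  have "\<not> int l ^ 2 dvd int l * g" using assms(2) lpos by (simp add: power2_eq_square)
  then show ?thesis unfolding W_def by simp
qed

lemma fiber_I:
  assumes M: "M \<ge> 1" and l: "Factorial_Ring.prime l" and Q: "Q \<in> cusps M" and xy: "(x, y) \<in> Q"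
    and nG: "\<not> int l dvd gcd y (int M)"
  shows "(\<Sum>P\<in>{P \<in> cusps (M * l). beta_cusp l M P = Q}. wP l M A t P) = t"
proof -
  define L where "L = int l"
  have lp: "Factorial_Ring.prime L" unfolding L_def using l by simp
  have Lnu: "\<not> is_unit L" using lp not_prime_unit by blast
  have cxy: "coprime x y" using cusps_coprime[OF Q xy] .
  have Qc: "Q = gamma0_rel M `` {(x, y)}" using cusps_class[OF Q xy] .
  obtain x1 y1 where xy1: "(x1, y1) \<in> Q" "\<not> L dvd y1"
  proof (cases "L dvd y")
    case False then show ?thesis using that xy by blast
  next
    case True
    have nM: "\<not> L dvd int M" using True nG unfolding L_def by simp
    have nx: "\<not> L dvd x" using True cxy Lnu coprime_common_divisor by blast
    have "\<not> L dvd int M * x" using nM nx lp prime_dvd_mult_iff by blast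
    then have n1: "\<not> L dvd int M * x + y" using True by (simp add: dvd_add_left_iff)
    have "((x, y), (x, int M * x + y)) \<in> gamma0_rel M"
      by (rule relI'[OF cxy, where a=1 and b=0 and c="int M" and d=1]) (auto simp: G0_def)
    then have "(x, int M * x + y) \<in> Q" using Qc by simp
    then show ?thesis using that n1 by blast
  qed
  have cxy1: "coprime x1 y1" using cusps_coprime[OF Q xy1(1)] .
  have "coprime y1 L" using prime_imp_coprime[OF lp xy1(2)] by (simp add: coprime_commute)
  then obtain s r where sr: "s * y1 + r * L = 1" using bezout_int[of y1 L] by (auto simp: coprime_iff_gcd_eq_1)
  define z where "z = x1 * r"
  have "((x1, y1), (L * z, y1)) \<in> gamma0_rel M"
  proof (rule relI'[OF cxy1, where a=1 and b="- x1 * s" and c=0 and d=1])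
    show "G0 M 1 (- x1 * s) 0 1" by (simp add: G0_def)
    have h: "r * L = 1 - s * y1" using sr by linarith
    have "L * z = x1 * (r * L)" unfolding z_def by (simp add: algebra_simps)
    also have "\<dots> = x1 * (1 - s * y1)" using h by simp
    finally show "L * z = 1 * x1 + - x1 * s * y1" by (simp add: algebra_simps)
    show "y1 = 0 * x1 + 1 * y1" by simp
  qed
  then have mQ: "(L * z, y1) \<in> Q" using cusps_class[OF Q xy1(1)] by simp
  have cz: "coprime z y1" using cusps_coprime[OF Q mQ] by simp
  define P0 where "P0 = gamma0_rel (M * l) `` {(z, y1)}"
  have P0c: "P0 \<in> cusps (M * l)" unfolding P0_def by (rule class_in_cusps[OF cz])
  have P0m: "(z, y1) \<in> P0" unfolding P0_def by (rule class_self[OF cz])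
  have bP0: "beta_cusp l M P0 = Q"
    unfolding P0_def beta_class[OF l cz] lift_nd[OF xy1(2)[unfolded L_def]]
    using cusps_class[OF Q mQ] unfolding L_def by simp
  define F where "F = {P \<in> cusps (M * l). beta_cusp l M P = Q}"
  have P0F: "P0 \<in> F" unfolding F_def using P0c bP0 by simp
  have finF: "finite F" unfolding F_def using finite_cusps[OF Ml_ge[OF M l]] by simp
  have wP0: "wP l M A t P0 = t"
  proof -
    have "\<not> L dvd gcd y1 (int (M * l))" using xy1(2) by (meson dvd_trans gcd_dvd1)
    then show ?thesis unfolding wP_rep[OF P0c P0m] W_def L_def by simp
  qed
  have wz: "wP l M A t P = 0" if PF: "P \<in> F" and ne: "P \<noteq> P0" for P
  proof -
    have Pc: "P \<in> cusps (M * l)" and bP: "beta_cusp l M P = Q" using PF unfolding F_def by auto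
    obtain x' y' where m': "(x', y') \<in> P" using cusps_ne[OF Pc] by auto
    have lQ: "lift l (x', y') \<in> Q" using lift_in_beta[OF l Pc m'] bP by simp
    show ?thesis
    proof (cases "L dvd y'")
      case False
      have "(int l * x', y') \<in> Q" using lQ lift_nd[of l y' x'] False unfolding L_def by simp
      then have "((L * z, y1), (int l * x', y')) \<in> gamma0_rel M" using cusps_rel[OF Q mQ] by blast
      then have "((z, y1), (x', y')) \<in> gamma0_rel (M * l)"
        using U0[OF l cz xy1(2)[unfolded L_def]] unfolding L_def by blast
      then have "P0 = P" using same_class[OF P0c Pc P0m m'] by blast
      then show ?thesis using ne by simp
    next
      case True
      have "(x', y' div L) \<in> Q" using lQ lift_d[of l y' x'] True unfolding L_def by simp
      then have "gcd (y' div L) (int M) = gcd y1 (int M)" using rel_gcd cusps_rel[OF Q mQ] by blast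
      moreover have "\<not> L dvd gcd y1 (int M)" using xy1(2) by (meson dvd_trans gcd_dvd1)
      ultimately have "W l A t (L * gcd (y' div L) (int M)) = 0" using W_L_nd[OF l] unfolding L_def by simp
      then show ?thesis unfolding wP_rep[OF Pc m'] using gcd_N_lift[OF l True[unfolded L_def]] unfolding L_def by simp
    qed
  qed
  have "(\<Sum>P\<in>F. wP l M A t P) = (\<Sum>P\<in>F. if P = P0 then t else 0)"
    by (rule sum.cong) (use wP0 wz in auto)
  also have "\<dots> = t" using P0F finF by (simp add: sum.delta)
  finally show ?thesis unfolding F_def .
qed


lemma W_L_d:
  assumes l: "Factorial_Ring.prime l" and "int l dvd g"
  shows "W l A t (int l * g) = (if int l ^ A dvd g ^ 2 then t else 1)"
proof -
  have lpos: "int l > 0" using l prime_gt_0_nat by simp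
  have "int l ^ 2 dvd int l * g" using assms(2) by (simp add: power2_eq_square)
  moreover have "int l ^ (A + 2) dvd (int l * g) ^ 2 \<longleftrightarrow> int l ^ A dvd g ^ 2"
  proof -
    have e1: "int l ^ (A + 2) = int l ^ 2 * int l ^ A" by (subst power_add) (simp add: mult.commute)
    have e2: "(int l * g) ^ 2 = int l ^ 2 * g ^ 2" by (simp add: power_mult_distrib)
    have "int l ^ 2 * int l ^ A dvd int l ^ 2 * g ^ 2 \<longleftrightarrow> int l ^ A dvd g ^ 2"
      using lpos by (subst dvd_mult_cancel_left) simp
    then show ?thesis unfolding e1 e2 .
  qed
  ultimately show ?thesis unfolding W_def by simp
qed

lemma fiber_II_common:
  assumes M: "M \<ge> 1" and l: "Factorial_Ring.prime l" and Q: "Q \<in> cusps M" and xy: "(x, y) \<in> Q"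
    and LG: "int l dvd gcd y (int M)"
    and Pc: "P \<in> cusps (M * l)" and bP: "beta_cusp l M P = Q" and m': "(x', y') \<in> P"
  shows "int l dvd y'" "((x, y), (x', y' div int l)) \<in> gamma0_rel M"
    "wP l M A t P = W l A t (int l * gcd y (int M))"
proof -
  define L where "L = int l"
  have lQ: "lift l (x', y') \<in> Q" using lift_in_beta[OF l Pc m'] bP by simp
  show Ly: "int l dvd y'"
  proof (rule ccontr)
    assume nd: "\<not> int l dvd y'"
    have "(int l * x', y') \<in> Q" using lQ lift_nd[OF nd] by simp
    then have "gcd y' (int M) = gcd y (int M)" using rel_gcd cusps_rel[OF Q xy] by blast
    then have "int l dvd y'" using LG by (metis dvd_trans gcd_dvd1)
    then show False using nd by simp
  qed
  have m2: "(x', y' div int l) \<in> Q" using lQ lift_d[OF Ly] by simp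
  show r: "((x, y), (x', y' div int l)) \<in> gamma0_rel M" using cusps_rel[OF Q xy m2] .
  have "gcd (y' div int l) (int M) = gcd y (int M)" using rel_gcd[OF r] .
  then show "wP l M A t P = W l A t (int l * gcd y (int M))"
    unfolding wP_rep[OF Pc m'] gcd_N_lift[OF l Ly] by simp
qed

lemma fiber_good:
  assumes M: "M \<ge> 1" and l: "Factorial_Ring.prime l" and Q: "Q \<in> cusps M" and xy: "(x, y) \<in> Q"
    and LG: "int l dvd gcd y (int M)" and good: "int l ^ A dvd (gcd y (int M)) ^ 2"
    and LA: "l ^ A dvd M" and nA: "\<not> l ^ (A + 1) dvd M"
  shows "(\<Sum>P\<in>{P \<in> cusps (M * l). beta_cusp l M P = Q}. wP l M A t P) = t"
proof -
  define L where "L = int l"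
  define G where "G = gcd y (int M)"
  have lp: "Factorial_Ring.prime L" unfolding L_def using l by simp
  have lpos: "L > 0" unfolding L_def using l prime_gt_0_nat by simp
  have cxy: "coprime x y" using cusps_coprime[OF Q xy] .
  have Ly: "L dvd y" using LG unfolding L_def by (meson dvd_trans gcd_dvd1)
  have LM: "L dvd int M" using LG unfolding L_def by (meson dvd_trans gcd_dvd2)
  have Ay: "L ^ A dvd y ^ 2"
  proof -
    have "G dvd y" unfolding G_def by simp
    then have "G ^ 2 dvd y ^ 2" by (simp add: power2_eq_square mult_dvd_mono)
    then show ?thesis using good unfolding G_def L_def by (meson dvd_trans)
  qed
  define m where "m = int (M div l ^ A)"
  have Mm: "int M = L ^ A * m" unfolding m_def L_def using LA by (metis dvd_mult_div_cancel of_nat_mult of_nat_power)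
  have cm: "coprime m L"
  proof -
    have "\<not> L dvd m"
    proof
      assume "L dvd m"
      then have "L ^ A * L dvd int M" unfolding Mm by simp
      then have "int (l ^ (A + 1)) dvd int M" unfolding L_def by (simp add: mult.commute)
      then show False using nA by (simp only: of_nat_dvd_iff)
    qed
    then have "coprime L m" by (rule prime_imp_coprime[OF lp])
    then show ?thesis by (metis coprime_commute)
  qed
  have cp1: "coprime x (L * y)" using coprime_shift[OF cxy Ly, of 0] by simp
  define P1 where "P1 = gamma0_rel (M * l) `` {(x, L * y)}"
  have P1c: "P1 \<in> cusps (M * l)" unfolding P1_def by (rule class_in_cusps[OF cp1])
  have P1m: "(x, L * y) \<in> P1" unfolding P1_def by (rule class_self[OF cp1])
  have bP1: "beta_cusp l M P1 = Q"
  proof -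
    have "beta_cusp l M P1 = gamma0_rel M `` {lift l (x, int l * y)}"
      using beta_class[OF l cp1[unfolded L_def]] unfolding P1_def L_def by simp
    also have "lift l (x, int l * y) = (x, y)"
      using lift_d[of l "int l * y" x, OF dvd_triv_left] lpos unfolding L_def by simp
    finally show ?thesis using cusps_class[OF Q xy] by simp
  qed
  define F where "F = {P \<in> cusps (M * l). beta_cusp l M P = Q}"
  have "F = {P1}"
  proof
    show "{P1} \<subseteq> F" unfolding F_def using P1c bP1 by simp
    show "F \<subseteq> {P1}"
    proof
      fix P assume "P \<in> F"
      then have Pc: "P \<in> cusps (M * l)" and bP: "beta_cusp l M P = Q" unfolding F_def by auto
      obtain x' y' where m': "(x', y') \<in> P" using cusps_ne[OF Pc] by auto
      note c = fiber_II_common[OF M l Q xy LG Pc bP m']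
      have "((x, L * y), (x', L * (y' div L))) \<in> gamma0_rel (M * l)"
        using U1[OF l cxy Ly[unfolded L_def] LM[unfolded L_def] Ay[unfolded L_def] Mm[unfolded L_def] cm[unfolded L_def] c(2)]
        unfolding L_def by simp
      moreover have "L * (y' div L) = y'" using c(1) unfolding L_def by simp
      ultimately have "((x, L * y), (x', y')) \<in> gamma0_rel (M * l)" by simp
      then have "P1 = P" using same_class[OF P1c Pc P1m m'] by blast
      then show "P \<in> {P1}" by simp
    qed
  qed
  moreover have "wP l M A t P1 = t"
    using fiber_II_common(3)[OF M l Q xy LG P1c bP1 P1m, of A t] W_L_d[OF l LG, of A t] good by simp
  ultimately show ?thesis unfolding F_def[symmetric] by simp
qed

lemma fiber_bad:
  assumes M: "M \<ge> 1" and l: "Factorial_Ring.prime l" and Q: "Q \<in> cusps M" and xy: "(x, y) \<in> Q"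
    and LG: "int l dvd gcd y (int M)" and bad: "\<not> int l ^ A dvd (gcd y (int M)) ^ 2"
    and LA: "l ^ A dvd M" and ht: "t = int l \<or> A \<le> 2"
  shows "(\<Sum>P\<in>{P \<in> cusps (M * l). beta_cusp l M P = Q}. wP l M A t P) = t"
proof -
  define L where "L = int l"
  define G where "G = gcd y (int M)"
  have lpos: "L > 0" unfolding L_def using l prime_gt_0_nat by simp
  have cxy: "coprime x y" using cusps_coprime[OF Q xy] .
  have Ly: "L dvd y" using LG unfolding L_def by (meson dvd_trans gcd_dvd1)
  have LM: "L dvd int M" using LG unfolding L_def by (meson dvd_trans gcd_dvd2)
  have LA': "L ^ A dvd int M" unfolding L_def using LA by (metis of_nat_dvd_iff of_nat_power)
  have tL: "t = L"
  proof (rule ccontr)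
    assume "t \<noteq> L"
    then have "A \<le> 2" using ht unfolding L_def by simp
    then have "L ^ A dvd L ^ 2" by (simp add: le_imp_power_dvd)
    moreover have "L ^ 2 dvd G ^ 2" using LG unfolding G_def L_def by (simp add: power2_eq_square mult_dvd_mono)
    ultimately have "L ^ A dvd G ^ 2" by (rule dvd_trans)
    then show False using bad unfolding G_def L_def by simp
  qed
  have y0: "y \<noteq> 0"
  proof
    assume "y = 0"
    then have "G = int M" unfolding G_def by simp
    then have "L ^ A dvd G ^ 2" using LA' by (simp add: power2_eq_square)
    then show False using bad unfolding G_def L_def by simp
  qed
  define f where "f = (\<lambda>b. gamma0_rel (M * l) `` {(x + b * y, L * y)})"
  have cpb: "coprime (x + b * y) (L * y)" for b using coprime_shift[OF cxy Ly] .
  define F where "F = {P \<in> cusps (M * l). beta_cusp l M P = Q}"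
  have FF: "F = f ` {0..<L}"
  proof
    show "F \<subseteq> f ` {0..<L}"
    proof
      fix P assume "P \<in> F"
      then have Pc: "P \<in> cusps (M * l)" and bP: "beta_cusp l M P = Q" unfolding F_def by auto
      obtain x' y' where m': "(x', y') \<in> P" using cusps_ne[OF Pc] by auto
      note c = fiber_II_common[OF M l Q xy LG Pc bP m']
      obtain b where b: "b \<in> {0..<L}" "((x + b * y, L * y), (x', L * (y' div L))) \<in> gamma0_rel (M * l)"
        using U2[OF l cxy Ly[unfolded L_def] LM[unfolded L_def] c(2)] unfolding L_def by blast
      moreover have "L * (y' div L) = y'" using c(1) unfolding L_def by simp
      ultimately have "((x + b * y, L * y), (x', y')) \<in> gamma0_rel (M * l)" by simp
      then have "f b = P" unfolding f_def using same_class[OF class_in_cusps[OF cpb] Pc class_self[OF cpb] m'] by blast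
      then show "P \<in> f ` {0..<L}" using b(1) by blast
    qed
    show "f ` {0..<L} \<subseteq> F"
    proof
      fix P assume "P \<in> f ` {0..<L}"
      then obtain b where P: "P = f b" by blast
      have Pc: "P \<in> cusps (M * l)" unfolding P f_def by (rule class_in_cusps[OF cpb])
      have "beta_cusp l M P = gamma0_rel M `` {lift l (x + b * y, int l * y)}"
        using beta_class[OF l cpb[unfolded L_def]] unfolding P f_def L_def by simp
      also have "lift l (x + b * y, int l * y) = (x + b * y, y)"
        using lift_d[of l "int l * y" "x + b * y", OF dvd_triv_left] lpos unfolding L_def by simp
      finally have "beta_cusp l M P = gamma0_rel M `` {(x + b * y, y)}" .
      also have "\<dots> = Q"
      proof -
        have "((x, y), (x + b * y, y)) \<in> gamma0_rel M"
          by (rule relI'[OF cxy, where a=1 and b=b and c=0 and d=1]) (auto simp: G0_def)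
        then show ?thesis using cusps_class[OF Q xy] class_eq by metis
      qed
      finally show "P \<in> F" unfolding F_def using Pc by simp
    qed
  qed
  have inj: "inj_on f {0..<L}"
  proof (rule inj_onI)
    fix b b' assume b: "b \<in> {0..<L}" and b': "b' \<in> {0..<L}" and e: "f b = f b'"
    have "((x + b * y, L * y), (x + b' * y, L * y)) \<in> gamma0_rel (M * l)"
      using e unfolding f_def using class_eq_iff[OF cpb cpb] by blast
    then show "b = b'" using D2[OF l M cxy Ly[unfolded L_def] y0 LA'[unfolded L_def] bad b[unfolded L_def] b'[unfolded L_def]]
      unfolding L_def by blast
  qed
  have w1: "wP l M A t P = 1" if "P \<in> F" for P
  proof -
    have Pc: "P \<in> cusps (M * l)" and bP: "beta_cusp l M P = Q" using that unfolding F_def by auto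
    obtain x' y' where m': "(x', y') \<in> P" using cusps_ne[OF Pc] by auto
    show ?thesis using fiber_II_common(3)[OF M l Q xy LG Pc bP m', of A t] W_L_d[OF l LG, of A t] bad by simp
  qed
  have "(\<Sum>P\<in>F. wP l M A t P) = (\<Sum>P\<in>F. 1)" using w1 by simp
  also have "\<dots> = int (card F)" by simp
  also have "card F = card {0..<L}" unfolding FF using inj by (simp add: card_image)
  also have "int (card {0..<L}) = L" using lpos by simp
  finally show ?thesis unfolding F_def tL .
qed


lemma fiber_sum:
  assumes M: "M \<ge> 1" and l: "Factorial_Ring.prime l" and Q: "Q \<in> cusps M"
    and LA: "l ^ A dvd M" and nA: "\<not> l ^ (A + 1) dvd M" and ht: "t = int l \<or> A \<le> 2"
  shows "(\<Sum>P\<in>{P \<in> cusps (M * l). beta_cusp l M P = Q}. wP l M A t P) = t"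
proof -
  obtain x y where xy: "(x, y) \<in> Q" using cusps_ne[OF Q] by auto
  show ?thesis
  proof (cases "int l dvd gcd y (int M)")
    case False
    then show ?thesis using fiber_I[OF M l Q xy] by blast
  next
    case True
    show ?thesis
    proof (cases "int l ^ A dvd (gcd y (int M))\<^sup>2")
      case True
      then show ?thesis using fiber_good[OF M l Q xy \<open>int l dvd gcd y (int M)\<close> _ LA nA] by blast
    next
      case False
      then show ?thesis using fiber_bad[OF M l Q xy \<open>int l dvd gcd y (int M)\<close> _ LA ht] by blast
    qed
  qed
qed

definition Ediv :: "nat \<Rightarrow> nat \<Rightarrow> nat \<Rightarrow> int \<Rightarrow> ((int \<times> int) set \<Rightarrow> int) \<Rightarrow> (int \<times> int) set \<Rightarrow> int" where
  "Ediv l M A t D = (\<lambda>P. if P \<in> cusps (M * l) then D (beta_cusp l M P) * wP l M A t P else 0)"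

lemma E_fiber:
  assumes M: "M \<ge> 1" and l: "Factorial_Ring.prime l" and Q: "Q \<in> cusps M"
    and LA: "l ^ A dvd M" and nA: "\<not> l ^ (A + 1) dvd M" and ht: "t = int l \<or> A \<le> 2"
  shows "(\<Sum>P\<in>{P \<in> cusps (M * l). beta_cusp l M P = Q}. Ediv l M A t D P) = t * D Q"
proof -
  have "(\<Sum>P\<in>{P \<in> cusps (M * l). beta_cusp l M P = Q}. Ediv l M A t D P)
      = (\<Sum>P\<in>{P \<in> cusps (M * l). beta_cusp l M P = Q}. D Q * wP l M A t P)"
    unfolding Ediv_def by (rule sum.cong) auto
  also have "\<dots> = D Q * t" using fiber_sum[OF M l Q LA nA ht] by (simp add: sum_distrib_left[symmetric])
  finally show ?thesis by simp
qed

lemma E_rat: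
  assumes M: "M \<ge> 1" and l: "Factorial_Ring.prime l" and D: "D \<in> rat_cusp_div0 M"
    and LA: "l ^ A dvd M" and nA: "\<not> l ^ (A + 1) dvd M" and ht: "t = int l \<or> A \<le> 2"
  shows "Ediv l M A t D \<in> rat_cusp_div0 (M * l)"
  unfolding rat_cusp_div0_def
proof (intro CollectI conjI allI impI ballI)
  fix P assume "P \<notin> cusps (M * l)" then show "Ediv l M A t D P = 0" unfolding Ediv_def by simp
next
  have fN: "finite (cusps (M * l))" using finite_cusps[OF Ml_ge[OF M l]] .
  have fM: "finite (cusps M)" using finite_cusps[OF M] .
  have "(\<Sum>P\<in>cusps (M * l). Ediv l M A t D P)
      = (\<Sum>Q\<in>cusps M. \<Sum>P\<in>{P. P \<in> cusps (M * l) \<and> beta_cusp l M P = Q}. Ediv l M A t D P)"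
    by (rule sum.group[OF fN fM, symmetric]) (use beta_in_cusps[OF l] in blast)
  also have "\<dots> = (\<Sum>Q\<in>cusps M. t * D Q)"
    by (rule sum.cong) (use E_fiber[OF M l _ LA nA ht] in auto)
  also have "\<dots> = 0" using D unfolding rat_cusp_div0_def by (simp add: sum_distrib_left[symmetric])
  finally show "(\<Sum>P\<in>cusps (M * l). Ediv l M A t D P) = 0" .
next
  fix u P P' assume u: "coprime u (int (M * l))" and P: "P \<in> cusps (M * l)" and P': "P' \<in> cusps (M * l)"
    and g: "galois_rel (M * l) u P P'"
  have uM: "coprime u (int M)" using u by simp
  have "D (beta_cusp l M P) = D (beta_cusp l M P')"
    using D uM beta_in_cusps[OF l P] beta_in_cusps[OF l P'] beta_galois[OF l P P' g]
    unfolding rat_cusp_div0_def by blast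
  moreover have "wP l M A t P = wP l M A t P'"
  proof -
    obtain x y x' where a: "(x, y) \<in> P" "(x', y) \<in> P'"
      using g unfolding galois_rel_def by blast
    show ?thesis unfolding wP_rep[OF P a(1)] wP_rep[OF P' a(2)] ..
  qed
  ultimately show "Ediv l M A t D P = Ediv l M A t D P'" unfolding Ediv_def using P P' by simp
qed

lemma E_push:
  assumes M: "M \<ge> 1" and l: "Factorial_Ring.prime l" and D: "D \<in> rat_cusp_div0 M"
    and LA: "l ^ A dvd M" and nA: "\<not> l ^ (A + 1) dvd M" and ht: "t = int l \<or> A \<le> 2"
  shows "beta_push l M (Ediv l M A t D) = (\<lambda>Q. t * D Q)"
proof
  fix Q show "beta_push l M (Ediv l M A t D) Q = t * D Q"
  proof (cases "Q \<in> cusps M")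
    case True
    then show ?thesis unfolding beta_push_def using E_fiber[OF M l True LA nA ht] by simp
  next
    case False
    then show ?thesis unfolding beta_push_def using D unfolding rat_cusp_div0_def by simp
  qed
qed

lemma mult_facts:
  assumes M: "M \<ge> 1" and l: "Factorial_Ring.prime (l::nat)"
  shows "l ^ multiplicity l M dvd M" "\<not> l ^ (multiplicity l M + 1) dvd M"
proof -
  show "l ^ multiplicity l M dvd M" by (rule multiplicity_dvd)
  have "M \<noteq> 0" "\<not> is_unit l" using M l not_prime_unit by auto
  then show "\<not> l ^ (multiplicity l M + 1) dvd M"
    using power_dvd_iff_le_multiplicity[of M l "multiplicity l M + 1"] by linarith
qed

lemma image_l:
  assumes M: "M \<ge> 1" and l: "Factorial_Ring.prime l" and D: "D \<in> rat_cusp_div0 M"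
  shows "(\<lambda>Q. int l * D Q) \<in> beta_push l M ` rat_cusp_div0 (M * l)"
proof -
  note mf = mult_facts[OF M l]
  have "beta_push l M (Ediv l M (multiplicity l M) (int l) D) = (\<lambda>Q. int l * D Q)"
    using E_push[OF M l D mf] by simp
  moreover have "Ediv l M (multiplicity l M) (int l) D \<in> rat_cusp_div0 (M * l)"
    using E_rat[OF M l D mf] by simp
  ultimately show ?thesis by (metis image_eqI)
qed

lemma image_surj:
  assumes M: "M \<ge> 1" and l: "Factorial_Ring.prime l" and D: "D \<in> rat_cusp_div0 M"
    and n4: "\<not> l ^ 4 dvd M * l"
  shows "D \<in> beta_push l M ` rat_cusp_div0 (M * l)"
proof -
  note mf = mult_facts[OF M l]
  have A2: "multiplicity l M \<le> 2"
  proof (rule ccontr)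
    assume "\<not> multiplicity l M \<le> 2"
    then have "l ^ 3 dvd M" using multiplicity_dvd'[of 3 l M] by simp
    then have "l ^ 3 * l dvd M * l" by (rule mult_dvd_mono) simp
    then show False using n4 by (simp add: power_Suc2[symmetric] numeral_eq_Suc)
  qed
  have ht: "(1::int) = int l \<or> multiplicity l M \<le> 2" using A2 by simp
  have "beta_push l M (Ediv l M (multiplicity l M) 1 D) = (\<lambda>Q. 1 * D Q)"
    using E_push[OF M l D mf ht] .
  then have "beta_push l M (Ediv l M (multiplicity l M) 1 D) = D" by simp
  moreover have "Ediv l M (multiplicity l M) 1 D \<in> rat_cusp_div0 (M * l)"
    using E_rat[OF M l D mf ht] .
  ultimately show ?thesis by (metis image_eqI)
qed


primrec phi :: "('a, 'b) monoid_scheme \<Rightarrow> (nat \<Rightarrow> 'a) \<Rightarrow> nat \<Rightarrow> (nat \<Rightarrow> int) \<Rightarrow> 'a" where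
  "phi G g 0 c = \<one>\<^bsub>G\<^esub>"
| "phi G g (Suc k) c = phi G g k c \<otimes>\<^bsub>G\<^esub> (g k [^]\<^bsub>G\<^esub> nat (c k))"

context comm_group
begin

lemma phi_closed: "(\<And>i. i < k \<Longrightarrow> g i \<in> carrier G) \<Longrightarrow> phi G g k c \<in> carrier G"
  by (induction k) auto

lemma phi_cong: "(\<And>i. i < k \<Longrightarrow> c i = c' i) \<Longrightarrow> (\<And>i. i < k \<Longrightarrow> g i = g' i) \<Longrightarrow> phi G g k c = phi G g' k c'"
  by (induction k) auto

lemma pow_mod_p:
  assumes x: "x \<in> carrier G" and xp: "x [^] (p::nat) = \<one>"
  shows "x [^] (n mod p) = x [^] n"
proof -
  have e: "x [^] (p * (n div p)) \<otimes> x [^] (n mod p) = x [^] n"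
    using nat_pow_mult[OF x, of "p * (n div p)" "n mod p"] by simp
  have "x [^] (p * (n div p)) = \<one>" using nat_pow_pow[OF x, of p "n div p"] xp by simp
  then show ?thesis using e x by simp
qed

lemma pow_add_mod:
  assumes x: "x \<in> carrier G" and xp: "x [^] (p::nat) = \<one>" and a: "a \<ge> 0" and b: "b \<ge> 0"
  shows "x [^] nat ((a + b) mod int p) = x [^] nat a \<otimes> x [^] nat b"
proof -
  have "nat ((a + b) mod int p) = (nat a + nat b) mod p"
    using a b by (simp add: nat_mod_distrib nat_add_distrib)
  then show ?thesis using pow_mod_p[OF x xp] x by (simp add: nat_pow_mult)
qed

lemma phi_hom:
  assumes g: "\<And>i. i < k \<Longrightarrow> g i \<in> carrier G" and gp: "\<And>i. i < k \<Longrightarrow> g i [^] (p::nat) = \<one>"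
    and c: "\<And>i. i < k \<Longrightarrow> c i \<ge> 0" and c': "\<And>i. i < k \<Longrightarrow> c' i \<ge> 0"
  shows "phi G g k (\<lambda>i. (c i + c' i) mod int p) = phi G g k c \<otimes> phi G g k c'"
  using assms
proof (induction k)
  case 0 then show ?case by simp
next
  case (Suc k)
  have IH: "phi G g k (\<lambda>i. (c i + c' i) mod int p) = phi G g k c \<otimes> phi G g k c'"
    using Suc by auto
  have gk: "g k \<in> carrier G" "g k [^] p = \<one>" "c k \<ge> 0" "c' k \<ge> 0" using Suc.prems by auto
  have pc: "phi G g k c \<in> carrier G" "phi G g k c' \<in> carrier G" using Suc.prems by (auto intro: phi_closed)
  have "phi G g (Suc k) (\<lambda>i. (c i + c' i) mod int p)
      = (phi G g k c \<otimes> phi G g k c') \<otimes> (g k [^] nat (c k) \<otimes> g k [^] nat (c' k))"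
    using IH pow_add_mod[OF gk] by simp
  also have "\<dots> = (phi G g k c \<otimes> g k [^] nat (c k)) \<otimes> (phi G g k c' \<otimes> g k [^] nat (c' k))"
    using pc gk(1) by (simp add: m_ac)
  finally show ?case by simp
qed

end


locale elab = comm_group +
  fixes p :: nat
  assumes p_prime: "Factorial_Ring.prime p"
    and exp_p: "x \<in> carrier G \<Longrightarrow> x [^] p = \<one>"
begin

abbreviation CC :: "nat \<Rightarrow> (nat \<Rightarrow> int) set" where
  "CC k \<equiv> PiE {..<k} (\<lambda>_. {0..<int p})"

lemma p_pos: "p > 0" using p_prime prime_gt_0_nat by blast

lemma S_mult:
  assumes g: "\<And>i. i < k \<Longrightarrow> g i \<in> carrier G" and c: "c \<in> CC k" and c': "c' \<in> CC k"
  shows "phi G g k c \<otimes> phi G g k c' \<in> phi G g k ` CC k"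
proof -
  define d where "d = restrict (\<lambda>i. (c i + c' i) mod int p) {..<k}"
  have d: "d \<in> CC k" unfolding d_def using p_pos by auto
  have "phi G g k d = phi G g k (\<lambda>i. (c i + c' i) mod int p)" unfolding d_def by (rule phi_cong) auto
  also have "\<dots> = phi G g k c \<otimes> phi G g k c'"
    by (rule phi_hom) (use g exp_p c c' in \<open>auto simp: PiE_iff\<close>)
  finally show ?thesis by (intro rev_image_eqI[OF d]) simp
qed

lemma phi_zero: "phi G g k (\<lambda>_. 0) = \<one>"
  by (induction k) auto

lemma S_one: "\<one> \<in> phi G g k ` CC k"
proof -
  have z: "(\<lambda>i\<in>{..<k}. (0::int)) \<in> CC k" using p_pos by auto
  have e: "phi G g k (\<lambda>i\<in>{..<k}. (0::int)) = phi G g k (\<lambda>_. 0)" by (rule phi_cong) auto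
  show ?thesis by (rule rev_image_eqI[OF z]) (simp only: e phi_zero)
qed

lemma S_inv:
  assumes g: "\<And>i. i < k \<Longrightarrow> g i \<in> carrier G" and c: "c \<in> CC k"
  shows "inv (phi G g k c) \<in> phi G g k ` CC k"
proof -
  define d where "d = restrict (\<lambda>i. (- c i) mod int p) {..<k}"
  have d: "d \<in> CC k" unfolding d_def using p_pos by auto
  have "phi G g k d \<otimes> phi G g k c = phi G g k c \<otimes> phi G g k d"
    by (rule m_comm) (auto intro: phi_closed g)
  also have "\<dots> = phi G g k (\<lambda>i. (c i + d i) mod int p)"
    by (rule phi_hom[symmetric]) (use g exp_p c d in \<open>auto simp: PiE_iff\<close>)
  also have "\<dots> = phi G g k (\<lambda>_. 0)" by (rule phi_cong) (simp_all add: d_def mod_add_right_eq)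
  also have "\<dots> = \<one>" by (rule phi_zero)
  finally have "inv (phi G g k c) = phi G g k d"
    by (rule inv_equality) (auto intro: phi_closed g)
  then show ?thesis by (intro rev_image_eqI[OF d]) simp
qed

lemma S_closed: "(\<And>i. i < k \<Longrightarrow> g i \<in> carrier G) \<Longrightarrow> phi G g k ` CC k \<subseteq> carrier G"
  using phi_closed by blast

lemma S_pow:
  assumes g: "\<And>i. i < k \<Longrightarrow> g i \<in> carrier G" and s: "s \<in> phi G g k ` CC k"
  shows "s [^] (e::nat) \<in> phi G g k ` CC k"
proof (induction e)
  case 0 then show ?case using S_one by simp
next
  case (Suc e)
  then obtain c where c: "c \<in> CC k" "s [^] e = phi G g k c" by blast
  obtain c' where c': "c' \<in> CC k" "s = phi G g k c'" using s by blast
  have "s [^] Suc e = phi G g k c \<otimes> phi G g k c'" using c c' by simp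
  then show ?case using S_mult[OF g c(1) c'(1)] by (simp only:)
qed

end


lemma dvd_small_zero2:
  fixes L k :: int
  assumes "L dvd k" "\<bar>k\<bar> < L"
  shows "k = 0"
proof (rule ccontr)
  assume "k \<noteq> 0"
  then have "\<bar>L\<bar> \<le> \<bar>k\<bar>" using dvd_imp_le_int assms(1) by blast
  then show False using assms(2) by simp
qed

context elab
begin

lemma phi_split:
  assumes "c \<in> CC (Suc k)"
  shows "phi G (g(k := x)) (Suc k) c = phi G g k (restrict c {..<k}) \<otimes> x [^] nat (c k)"
proof -
  have "phi G (g(k := x)) k c = phi G g k (restrict c {..<k})" by (rule phi_cong) auto
  then show ?thesis by simp
qed

lemma restrict_CC: "c \<in> CC (Suc k) \<Longrightarrow> restrict c {..<k} \<in> CC k"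
  by (auto simp: PiE_iff)

lemma extend:
  assumes g: "\<And>i. i < k \<Longrightarrow> g i \<in> carrier G" and inj: "inj_on (phi G g k) (CC k)"
    and x: "x \<in> carrier G" and nx: "x \<notin> phi G g k ` CC k"
  shows "inj_on (phi G (g(k := x)) (Suc k)) (CC (Suc k))"
proof (rule inj_onI)
  fix c c' assume c: "c \<in> CC (Suc k)" and c': "c' \<in> CC (Suc k)"
    and e: "phi G (g(k := x)) (Suc k) c = phi G (g(k := x)) (Suc k) c'"
  define r where "r = restrict c {..<k}"
  define r' where "r' = restrict c' {..<k}"
  have r: "r \<in> CC k" and r': "r' \<in> CC k" unfolding r_def r'_def using restrict_CC c c' by auto
  have pr: "phi G g k r \<in> carrier G" "phi G g k r' \<in> carrier G" using phi_closed g by auto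
  define a where "a = c k"
  define b where "b = c' k"
  have ab: "0 \<le> a" "a < int p" "0 \<le> b" "b < int p" using c c' unfolding a_def b_def by (auto simp: PiE_iff)
  have e2: "phi G g k r \<otimes> x [^] nat a = phi G g k r' \<otimes> x [^] nat b"
    using e unfolding phi_split[OF c] phi_split[OF c'] r_def r'_def a_def b_def .
  show "c = c'"
  proof (cases "a = b")
    case True
    then have "phi G g k r = phi G g k r'" using e2 pr x by simp
    then have "r = r'" using inj_onD[OF inj _ r r'] by blast
    show "c = c'"
    proof
      fix i
      show "c i = c' i"
      proof (cases "i < Suc k")
        case True
        then show ?thesis using \<open>r = r'\<close> \<open>a = b\<close> unfolding r_def r'_def a_def b_def
          by (cases "i = k") (auto simp: fun_eq_iff split: if_splits)
      next
        case False
        then show ?thesis using c c' by (auto simp: PiE_iff extensional_def)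
      qed
    qed
  next
    case False
    obtain ri where ri: "ri \<in> CC k" "inv (phi G g k r) = phi G g k ri" using S_inv[of k g r, OF g r] by blast
    have S: "inv (phi G g k r) \<otimes> phi G g k r' \<in> phi G g k ` CC k"
      using S_mult[of k g ri r', OF g ri(1) r'] ri(2) by simp
    define d where "d = (a - b) mod int p"
    have pp: "int p > 0" using p_pos by simp
    have d: "0 \<le> d" "d < int p" unfolding d_def using pp by auto
    have dab: "(d + b) mod int p = a" unfolding d_def using ab by (simp add: mod_add_left_eq)
    have "x [^] nat d \<otimes> x [^] nat b = x [^] nat a"
      using pow_add_mod[OF x exp_p[OF x] d(1) ab(3)] dab by simp
    also have "x [^] nat a = (inv (phi G g k r) \<otimes> phi G g k r') \<otimes> x [^] nat b"
    proof -
      have "x [^] nat a = inv (phi G g k r) \<otimes> (phi G g k r \<otimes> x [^] nat a)"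
        using pr x by (simp add: m_assoc[symmetric])
      also have "\<dots> = inv (phi G g k r) \<otimes> (phi G g k r' \<otimes> x [^] nat b)" using e2 by simp
      finally show ?thesis using pr x by (simp add: m_assoc)
    qed
    finally have xd: "x [^] nat d = inv (phi G g k r) \<otimes> phi G g k r'"
      using pr x by simp
    have d0: "d \<noteq> 0"
    proof
      assume "d = 0"
      then have "int p dvd a - b" unfolding d_def by (simp add: dvd_eq_mod_eq_0)
      then have "a mod int p = b mod int p" by (simp add: mod_eq_dvd_iff)
      then show False using False ab by simp
    qed
    have "coprime d (int p)"
    proof -
      have "\<not> int p dvd d"
      proof
        assume "int p dvd d"
        then have "d = 0" using d by (intro dvd_small_zero2) auto
        then show False using d0 by simp
      qed
      then show ?thesis using prime_imp_coprime[of "int p" d] p_prime by (simp add: coprime_commute)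
    qed
    then obtain u v where uv: "u * d + v * int p = 1" using bezout_int[of d "int p"] by (auto simp: coprime_iff_gcd_eq_1)
    define e' where "e' = u mod int p"
    have e'0: "e' \<ge> 0" unfolding e'_def using pp by simp
    have p1: "int p > 1" using p_prime prime_gt_1_nat by simp
    have de: "(d * e') mod int p = 1"
    proof -
      have "(d * e') mod int p = (d * u) mod int p" unfolding e'_def by (simp add: mod_mult_right_eq)
      also have "d * u = 1 + int p * (- v)" using uv by (simp add: algebra_simps)
      also have "(1 + int p * (- v)) mod int p = 1"
      proof -
        have "(1 + int p * (- v)) mod int p = 1 mod int p" by (simp add: mod_eq_dvd_iff)
        then show ?thesis using p1 by simp
      qed
      finally show ?thesis .
    qed
    have "(x [^] nat d) [^] nat e' \<in> phi G g k ` CC k" unfolding xd by (rule S_pow[of k g, OF g S])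
    moreover have "(x [^] nat d) [^] nat e' = x"
    proof -
      have "(x [^] nat d) [^] nat e' = x [^] (nat d * nat e')" using x by (simp add: nat_pow_pow)
      also have "\<dots> = x [^] ((nat d * nat e') mod p)" using pow_mod_p[OF x exp_p[OF x]] by simp
      also have "(nat d * nat e') mod p = nat ((d * e') mod int p)"
        using d e'0 by (simp add: nat_mod_distrib nat_mult_distrib)
      also have "\<dots> = 1" using de by simp
      finally show ?thesis using x by simp
    qed
    ultimately show "c = c'" using nx by simp
  qed
qed

end


context elab
begin

lemma card_CC: "card (CC k) = p ^ k"
  by (simp add: card_PiE)

theorem elab_iso:
  assumes fin: "finite (carrier G)"
  shows "\<exists>k::nat. G \<cong> product_group {..<k} (\<lambda>_. integer_mod_group p)"
proof -
  define good where "good k \<longleftrightarrow> (\<exists>g. (\<forall>i<k. g i \<in> carrier G) \<and> inj_on (phi G g k) (CC k))" for k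
  have bound: "k \<le> card (carrier G)" if "good k" for k
  proof -
    obtain g where g: "\<forall>i<k. g i \<in> carrier G" "inj_on (phi G g k) (CC k)" using \<open>good k\<close> unfolding good_def by blast
    have "p ^ k = card (phi G g k ` CC k)" using g(2) card_CC by (simp add: card_image)
    also have "\<dots> \<le> card (carrier G)" using S_closed[of k g] g(1) fin by (intro card_mono) auto
    finally have pk: "p ^ k \<le> card (carrier G)" .
    have "2 ^ k \<le> p ^ k" using p_prime prime_ge_2_nat by (simp add: power_mono)
    moreover have "k < 2 ^ k" by simp
    ultimately show ?thesis using pk by linarith
  qed
  have good0: "good 0" unfolding good_def by (rule exI[of _ "\<lambda>_. \<one>"]) (simp add: inj_on_def)
  define K where "K = Greatest good"
  have gK: "good K" unfolding K_def by (rule GreatestI_nat[of good 0 "card (carrier G)", OF good0 bound])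
  have leK: "k \<le> K" if "good k" for k unfolding K_def by (rule Greatest_le_nat[of good k "card (carrier G)", OF that bound])
  obtain g where g: "\<forall>i<K. g i \<in> carrier G" "inj_on (phi G g K) (CC K)" using gK unfolding good_def by blast
  have gi: "\<And>i. i < K \<Longrightarrow> g i \<in> carrier G" using g(1) by blast
  have surj: "phi G g K ` CC K = carrier G"
  proof
    show "phi G g K ` CC K \<subseteq> carrier G" using S_closed[of K g] gi by blast
    show "carrier G \<subseteq> phi G g K ` CC K"
    proof
      fix x assume x: "x \<in> carrier G"
      show "x \<in> phi G g K ` CC K"
      proof (rule ccontr)
        assume nx: "x \<notin> phi G g K ` CC K"
        have "inj_on (phi G (g(K := x)) (Suc K)) (CC (Suc K))" using extend[OF gi g(2) x nx] .
        moreover have "\<forall>i<Suc K. (g(K := x)) i \<in> carrier G" using gi x by auto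
        ultimately have "good (Suc K)" unfolding good_def by blast
        then have "Suc K \<le> K" by (rule leK)
        then show False by simp
      qed
    qed
  qed
  define PG where "PG = product_group {..<K} (\<lambda>_. integer_mod_group p)"
  have cPG: "carrier PG = CC K" unfolding PG_def using p_pos by (simp add: carrier_integer_mod_group)
  have hom: "phi G g K \<in> hom PG G"
  proof (rule homI)
    fix x assume "x \<in> carrier PG" then show "phi G g K x \<in> carrier G" using phi_closed gi by blast
  next
    fix x y assume x: "x \<in> carrier PG" and y: "y \<in> carrier PG"
    have "x \<otimes>\<^bsub>PG\<^esub> y = (\<lambda>i\<in>{..<K}. (x i + y i) mod int p)" unfolding PG_def by simp
    then have "phi G g K (x \<otimes>\<^bsub>PG\<^esub> y) = phi G g K (\<lambda>i. (x i + y i) mod int p)"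
      by (simp only:) (rule phi_cong, auto)
    also have "\<dots> = phi G g K x \<otimes> phi G g K y"
      by (rule phi_hom) (use gi exp_p x y cPG in \<open>auto simp: PiE_iff\<close>)
    finally show "phi G g K (x \<otimes>\<^bsub>PG\<^esub> y) = phi G g K x \<otimes> phi G g K y" .
  qed
  have bij: "bij_betw (phi G g K) (carrier PG) (carrier G)"
    unfolding bij_betw_def cPG using g(2) surj by (intro conjI)
  have "phi G g K \<in> iso PG G" by (rule isoI[OF hom bij])
  then have iso: "PG \<cong> G" by (rule is_isoI)
  have grp: "group PG" unfolding PG_def by simp
  have "G \<cong> PG" by (rule group.iso_sym[OF grp iso])
  then show ?thesis unfolding PG_def by (rule exI)
qed

end


lemma div0_carrier [simp]: "carrier (div0_group M) = rat_cusp_div0 M"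
  unfolding div0_group_def by simp
lemma div0_mult [simp]: "x \<otimes>\<^bsub>div0_group M\<^esub> y = (\<lambda>P. x P + y P)"
  unfolding div0_group_def by simp
lemma div0_one [simp]: "\<one>\<^bsub>div0_group M\<^esub> = (\<lambda>_. 0)"
  unfolding div0_group_def by simp

lemma rat_lin:
  assumes D: "D \<in> rat_cusp_div0 M" and E: "E \<in> rat_cusp_div0 M"
  shows "(\<lambda>P. a * D P + b * E P) \<in> rat_cusp_div0 M"
  using assms unfolding rat_cusp_div0_def
  by (auto simp: sum.distrib sum_distrib_left[symmetric])

lemma rat_zero: "(\<lambda>_. 0) \<in> rat_cusp_div0 M"
  unfolding rat_cusp_div0_def by simp

lemma rat_add: "D \<in> rat_cusp_div0 M \<Longrightarrow> E \<in> rat_cusp_div0 M \<Longrightarrow> (\<lambda>P. D P + E P) \<in> rat_cusp_div0 M"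
  using rat_lin[of D M E 1 1] by simp

lemma rat_neg: "D \<in> rat_cusp_div0 M \<Longrightarrow> (\<lambda>P. - D P) \<in> rat_cusp_div0 M"
  using rat_lin[of D M D "-1" 0] by simp

lemma div0_comm_group: "comm_group (div0_group M)"
proof (rule comm_groupI)
  fix x assume x: "x \<in> carrier (div0_group M)"
  show "\<exists>y\<in>carrier (div0_group M). y \<otimes>\<^bsub>div0_group M\<^esub> x = \<one>\<^bsub>div0_group M\<^esub>"
    by (rule bexI[of _ "\<lambda>P. - x P"]) (use x rat_neg in auto)
qed (auto simp: rat_add rat_zero algebra_simps)

lemma div0_group: "group (div0_group M)"
  using div0_comm_group comm_group.axioms(2) by blast

lemma div0_inv: "D \<in> rat_cusp_div0 M \<Longrightarrow> inv\<^bsub>div0_group M\<^esub> D = (\<lambda>P. - D P)"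
  by (rule group.inv_equality[OF div0_group]) (auto simp: rat_neg)

lemma div0_pow: "D \<in> rat_cusp_div0 M \<Longrightarrow> D [^]\<^bsub>div0_group M\<^esub> (n::nat) = (\<lambda>P. int n * D P)"
proof (induction n)
  case 0 then show ?case by simp
next
  case (Suc n) then show ?case by (simp add: algebra_simps)
qed

lemma H_subgroup:
  assumes M: "M \<ge> 1" and l: "Factorial_Ring.prime l"
  shows "subgroup (beta_push l M ` rat_cusp_div0 (M * l)) (div0_group M)"
proof (rule group.subgroupI[OF div0_group])
  show "beta_push l M ` rat_cusp_div0 (M * l) \<subseteq> carrier (div0_group M)"
    using push_rat[OF M l] by auto
  show "beta_push l M ` rat_cusp_div0 (M * l) \<noteq> {}" using rat_zero by blast
next
  fix a assume "a \<in> beta_push l M ` rat_cusp_div0 (M * l)"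
  then obtain D where D: "D \<in> rat_cusp_div0 (M * l)" "a = beta_push l M D" by blast
  have "inv\<^bsub>div0_group M\<^esub> a = (\<lambda>Q. - beta_push l M D Q)"
    using div0_inv push_rat[OF M l D(1)] D(2) by simp
  also have "\<dots> = beta_push l M (\<lambda>P. (-1) * D P)" using push_scale[of l M "-1" D] by simp
  finally show "inv\<^bsub>div0_group M\<^esub> a \<in> beta_push l M ` rat_cusp_div0 (M * l)"
    using rat_neg[OF D(1)] by simp
next
  fix a b assume "a \<in> beta_push l M ` rat_cusp_div0 (M * l)" "b \<in> beta_push l M ` rat_cusp_div0 (M * l)"
  then obtain D E where D: "D \<in> rat_cusp_div0 (M * l)" "a = beta_push l M D"
    and E: "E \<in> rat_cusp_div0 (M * l)" "b = beta_push l M E" by blast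
  have "a \<otimes>\<^bsub>div0_group M\<^esub> b = beta_push l M (\<lambda>P. D P + E P)" using D E push_add by simp
  then show "a \<otimes>\<^bsub>div0_group M\<^esub> b \<in> beta_push l M ` rat_cusp_div0 (M * l)"
    using rat_add[OF D(1) E(1)] by simp
qed


lemma coset_eq:
  assumes M: "M \<ge> 1" and l: "Factorial_Ring.prime l"
    and x: "x \<in> rat_cusp_div0 M" and y: "y \<in> rat_cusp_div0 M"
    and d: "(\<lambda>P. x P - y P) \<in> beta_push l M ` rat_cusp_div0 (M * l)"
  shows "beta_push l M ` rat_cusp_div0 (M * l) #>\<^bsub>div0_group M\<^esub> x = beta_push l M ` rat_cusp_div0 (M * l) #>\<^bsub>div0_group M\<^esub> y"
proof -
  let ?H = "beta_push l M ` rat_cusp_div0 (M * l)"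
  have sg: "subgroup ?H (div0_group M)" using H_subgroup[OF M l] .
  have Hc: "?H \<subseteq> carrier (div0_group M)" using subgroup.subset[OF sg] .
  have dc: "(\<lambda>P. x P - y P) \<in> carrier (div0_group M)" using d Hc by blast
  have "x = (\<lambda>P. x P - y P) \<otimes>\<^bsub>div0_group M\<^esub> y" by simp
  then have "?H #>\<^bsub>div0_group M\<^esub> x = (?H #>\<^bsub>div0_group M\<^esub> (\<lambda>P. x P - y P)) #>\<^bsub>div0_group M\<^esub> y"
    using group.coset_mult_assoc[OF div0_group Hc dc, of y] y by simp
  also have "?H #>\<^bsub>div0_group M\<^esub> (\<lambda>P. x P - y P) = ?H"
    using subgroup.rcos_const[OF sg div0_group d] .
  finally show ?thesis .
qed

lemma diff_in_H:
  assumes M: "M \<ge> 1" and l: "Factorial_Ring.prime l"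
    and x: "x \<in> rat_cusp_div0 M" and y: "y \<in> rat_cusp_div0 M"
    and r: "\<And>P. P \<in> cusps M \<Longrightarrow> x P mod int l = y P mod int l"
  shows "(\<lambda>P. x P - y P) \<in> beta_push l M ` rat_cusp_div0 (M * l)"
proof -
  have lpos: "int l > 0" using l prime_gt_0_nat by simp
  define z where "z = (\<lambda>P. (x P - y P) div int l)"
  have lz: "int l * z P = x P - y P" for P
  proof (cases "P \<in> cusps M")
    case True
    then have "int l dvd x P - y P" using r by (simp add: mod_eq_dvd_iff)
    then show ?thesis unfolding z_def by simp
  next
    case False
    then show ?thesis using x y unfolding z_def rat_cusp_div0_def by simp
  qed
  have zr: "z \<in> rat_cusp_div0 M"
    unfolding rat_cusp_div0_def
  proof (intro CollectI conjI allI impI ballI)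
    fix P assume "P \<notin> cusps M" then show "z P = 0" using x y unfolding z_def rat_cusp_div0_def by simp
  next
    have "int l * (\<Sum>P\<in>cusps M. z P) = (\<Sum>P\<in>cusps M. x P - y P)" by (simp add: sum_distrib_left lz)
    also have "\<dots> = 0" using x y unfolding rat_cusp_div0_def by (simp add: sum_subtractf)
    finally show "(\<Sum>P\<in>cusps M. z P) = 0" using lpos by simp
  next
    fix u P Q assume "coprime u (int M)" "P \<in> cusps M" "Q \<in> cusps M" "galois_rel M u P Q"
    then show "z P = z Q" using x y unfolding z_def rat_cusp_div0_def by auto
  qed
  have "(\<lambda>Q. int l * z Q) \<in> beta_push l M ` rat_cusp_div0 (M * l)" using image_l[OF M l zr] .
  moreover have "(\<lambda>Q. int l * z Q) = (\<lambda>P. x P - y P)" using lz by auto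
  ultimately show ?thesis by simp
qed

lemma quotient_finite:
  assumes M: "M \<ge> 1" and l: "Factorial_Ring.prime l"
  shows "finite (carrier (div0_group M Mod (beta_push l M ` rat_cusp_div0 (M * l))))"
proof -
  let ?H = "beta_push l M ` rat_cusp_div0 (M * l)"
  let ?G = "div0_group M"
  define rho where "rho = (\<lambda>x. restrict (\<lambda>P. x P mod int l) (cusps M))"
  define rep where "rep = (\<lambda>r. SOME x. x \<in> rat_cusp_div0 M \<and> rho x = r)"
  have lpos: "int l > 0" using l prime_gt_0_nat by simp
  have fin: "finite (rho ` rat_cusp_div0 M)"
  proof (rule finite_subset)
    show "rho ` rat_cusp_div0 M \<subseteq> PiE (cusps M) (\<lambda>_. {0..<int l})"
      unfolding rho_def using lpos by (auto simp: PiE_iff)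
    show "finite (PiE (cusps M) (\<lambda>_. {0..<int l}))" using finite_cusps[OF M] by (intro finite_PiE) auto
  qed
  have "carrier (?G Mod ?H) = (\<lambda>x. ?H #>\<^bsub>?G\<^esub> x) ` rat_cusp_div0 M"
    unfolding carrier_FactGroup by simp
  also have "\<dots> \<subseteq> (\<lambda>r. ?H #>\<^bsub>?G\<^esub> rep r) ` (rho ` rat_cusp_div0 M)"
  proof
    fix C assume "C \<in> (\<lambda>x. ?H #>\<^bsub>?G\<^esub> x) ` rat_cusp_div0 M"
    then obtain x where x: "x \<in> rat_cusp_div0 M" "C = ?H #>\<^bsub>?G\<^esub> x" by blast
    have ex: "\<exists>x'. x' \<in> rat_cusp_div0 M \<and> rho x' = rho x" using x(1) by blast
    have r: "rep (rho x) \<in> rat_cusp_div0 M \<and> rho (rep (rho x)) = rho x"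
      unfolding rep_def by (rule someI_ex[OF ex])
    have rr: "rep (rho x) \<in> rat_cusp_div0 M" using r by simp
    have "rep (rho x) P mod int l = x P mod int l" if P: "P \<in> cusps M" for P
    proof -
      have "rho (rep (rho x)) P = rho x P" using r by simp
      then show ?thesis using P unfolding rho_def by simp
    qed
    then have "?H #>\<^bsub>?G\<^esub> rep (rho x) = ?H #>\<^bsub>?G\<^esub> x"
      by (intro coset_eq[OF M l rr x(1) diff_in_H[OF M l rr x(1)]])
    moreover have rx: "rho x \<in> rho ` rat_cusp_div0 M" using x(1) by (rule imageI)
    ultimately show "C \<in> (\<lambda>r. ?H #>\<^bsub>?G\<^esub> rep r) ` (rho ` rat_cusp_div0 M)"
      using x(2) by (intro rev_image_eqI[OF rx]) simp
  qed
  finally show ?thesis using fin by (rule finite_subset[OF _ finite_imageI])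
qed


lemma quotient_exp:
  assumes M: "M \<ge> 1" and l: "Factorial_Ring.prime l"
    and C: "C \<in> carrier (div0_group M Mod (beta_push l M ` rat_cusp_div0 (M * l)))"
  shows "C [^]\<^bsub>div0_group M Mod (beta_push l M ` rat_cusp_div0 (M * l))\<^esub> l
       = \<one>\<^bsub>div0_group M Mod (beta_push l M ` rat_cusp_div0 (M * l))\<^esub>"
proof -
  let ?H = "beta_push l M ` rat_cusp_div0 (M * l)"
  let ?G = "div0_group M"
  have sg: "subgroup ?H ?G" using H_subgroup[OF M l] .
  have nm: "?H \<lhd> ?G" using comm_group.subgroup_imp_normal[OF div0_comm_group sg] .
  have gq: "group (?G Mod ?H)" using normal.factorgroup_is_group[OF nm] .
  obtain x where x: "x \<in> rat_cusp_div0 M" "C = ?H #>\<^bsub>?G\<^esub> x"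
    using C unfolding carrier_FactGroup by auto
  have hom: "(\<lambda>a. ?H #>\<^bsub>?G\<^esub> a) \<in> hom ?G (?G Mod ?H)" using normal.r_coset_hom_Mod[OF nm] .
  have "C [^]\<^bsub>?G Mod ?H\<^esub> l = ?H #>\<^bsub>?G\<^esub> (x [^]\<^bsub>?G\<^esub> l)"
    using hom_nat_pow[OF hom _ div0_group gq, of x l] x by simp
  also have "x [^]\<^bsub>?G\<^esub> l = (\<lambda>P. int l * x P)" using div0_pow[OF x(1)] .
  also have "?H #>\<^bsub>?G\<^esub> (\<lambda>P. int l * x P) = ?H"
    using subgroup.rcos_const[OF sg div0_group image_l[OF M l x(1)]] .
  finally show ?thesis by simp
qed

theorem lemma3p4:
  fixes M l :: nat
  assumes "M \<ge> 1" and "Factorial_Ring.prime l"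
  shows "\<exists>k::nat.
     div0_group M Mod (beta_push l M ` rat_cusp_div0 (M * l))
       \<cong> product_group {..<k} (\<lambda>_. integer_mod_group l)
     \<and> (\<not> l ^ 4 dvd M * l \<longrightarrow> k = 0 \<and> beta_push l M ` rat_cusp_div0 (M * l) = rat_cusp_div0 M)"
proof -
  note M = assms(1) and l = assms(2)
  let ?H = "beta_push l M ` rat_cusp_div0 (M * l)"
  let ?G = "div0_group M"
  have sg: "subgroup ?H ?G" using H_subgroup[OF M l] .
  have cq: "comm_group (?G Mod ?H)" using comm_group.abelian_FactGroup[OF div0_comm_group sg] .
  have el: "elab (?G Mod ?H) l"
    unfolding elab_def elab_axioms_def using cq l quotient_exp[OF M l] by blast
  obtain k :: nat where k: "?G Mod ?H \<cong> product_group {..<k} (\<lambda>_. integer_mod_group l)"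
    using elab.elab_iso[OF el quotient_finite[OF M l]] by blast
  have "\<not> l ^ 4 dvd M * l \<longrightarrow> k = 0 \<and> ?H = rat_cusp_div0 M"
  proof
    assume n4: "\<not> l ^ 4 dvd M * l"
    have HM: "?H = rat_cusp_div0 M"
    proof
      show "?H \<subseteq> rat_cusp_div0 M" using push_rat[OF M l] by blast
      show "rat_cusp_div0 M \<subseteq> ?H" using image_surj[OF M l _ n4] by blast
    qed
    have "carrier (?G Mod ?H) = {?H}"
    proof -
      have "carrier (?G Mod ?H) = (\<lambda>x. ?H #>\<^bsub>?G\<^esub> x) ` rat_cusp_div0 M"
        unfolding carrier_FactGroup by simp
      also have "\<dots> = (\<lambda>x. ?H) ` rat_cusp_div0 M"
      proof (rule image_cong[OF refl])
        fix x assume "x \<in> rat_cusp_div0 M"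
        then show "?H #>\<^bsub>?G\<^esub> x = ?H" using subgroup.rcos_const[OF sg div0_group] HM by blast
      qed
      also have "\<dots> = {?H}" using rat_zero by blast
      finally show ?thesis .
    qed
    moreover obtain f where f: "f \<in> iso (?G Mod ?H) (product_group {..<k} (\<lambda>_. integer_mod_group l))"
      using k unfolding is_iso_def by blast
    ultimately have "card {?H} = card (carrier (product_group {..<k} (\<lambda>_. integer_mod_group l)))"
      unfolding iso_def using bij_betw_same_card by fastforce
    also have "\<dots> = l ^ k"
      using l prime_gt_0_nat[OF l] by (simp add: carrier_integer_mod_group card_PiE)
    finally have "l ^ k = 1" by simp
    then have "k = 0" using l prime_gt_1_nat[OF l] by (simp add: power_eq_1_iff)
    then show "k = 0 \<and> ?H = rat_cusp_div0 M" using HM by simp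
  qed
  then show ?thesis using k by blast
qed


end
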